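(* For $[i,j]\in W^P$, $k\in\{1,2\}$ and $d=(d_1,d_2)\in\mathbb{Z}_{\ge0}^2$, \[\Gamma_d(X_{[i,j]},D^{[k]})=\begin{cases}\Gamma_d(X_{[i,j]}) & \text{if } d_k>0,\\ \Gamma_d(X_{[i,j]})\cap D^{[k]} & \text{if } d_k=0.\end{cases}\]
   Context: Let $n\ge 3$ and $X=\mathrm{Fl}(1,n-1;n)$, the variety of flags $U\subset V\subset\mathbb{C}^n$ with $\dim U=1,\dim V=n-1$, with projections $p_1:(U,V)\mapsto U$, $p_2:(U,V)\mapsto V$; $X$ is the hypersurface $x_1y_1+\dots+x_ny_n=0$ in $\mathbb{P}(\mathbb{C}^n)\times\mathbb{P}((\mathbb{C}^n)^* )$. $W^P$ is the set of pairs $[i,j]$ of distinct integers in $\{1,\dots,n\}$; $X_{[i,j]}$ is the Schubert variety $x_{i+1}=\dots=x_n=y_1=\dots=y_{j-1}=0$. $D^{[1]}=\{x_1=0\}$, $D^{[2]}=\{y_n=0\}$. A degree $d=(d_1,d_2)$ of a stable map $f$ means $p_1\circ f$ has degree $d_1$ and $p_2\circ f$ degree $d_2$. $M_d=\overline{M}_{0,3}(X,d)$ with evaluation maps $\mathrm{ev}_1,\mathrm{ev}_2,\mathrm{ev}_3$; $\Gamma_d(X_1)=\mathrm{ev}_2(\mathrm{ev}_1^{-1}(X_1))$ and $\Gamma_d(X_1,X_2)=\mathrm{ev}_3(\mathrm{ev}_1^{-1}(X_1)\cap\mathrm{ev}_2^{-1}(X_2))$. *)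

theory Defs
  imports Complex_Main
begin

(* Points of P(C^n) x P((C^n)^* ) are represented by pairs of nonzero vectors
   x, y :: nat => complex supported on {1..n}; all sets of points below are
   invariant under rescaling of representatives. *)

type_synonym cvec = "nat \<Rightarrow> complex"

definition in_space :: "nat \<Rightarrow> cvec \<Rightarrow> bool" where
  "in_space n x \<longleftrightarrow> (\<forall>k. (k < 1 \<or> n < k) \<longrightarrow> x k = 0)"

definition nonzero_vec :: "cvec \<Rightarrow> bool" where
  "nonzero_vec x \<longleftrightarrow> (\<exists>k. x k \<noteq> 0)"

(* the flag variety X = Fl(1,n-1;n) as the hypersurface sum x_k y_k = 0 *)
definition Xpts :: "nat \<Rightarrow> (cvec \<times> cvec) set" where
  "Xpts n = {(x, y). in_space n x \<and> in_space n y \<and> nonzero_vec x \<and> nonzero_vec y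
                   \<and> (\<Sum>k=1..n. x k * y k) = 0}"

definition proj_eq :: "cvec \<Rightarrow> cvec \<Rightarrow> bool" where
  "proj_eq x x' \<longleftrightarrow> (\<exists>c. c \<noteq> 0 \<and> x' = (\<lambda>k. c * x k))"

definition pt_eq :: "cvec \<times> cvec \<Rightarrow> cvec \<times> cvec \<Rightarrow> bool" where
  "pt_eq p p' \<longleftrightarrow> proj_eq (fst p) (fst p') \<and> proj_eq (snd p) (snd p')"

definition WP :: "nat \<Rightarrow> (nat \<times> nat) set" where
  "WP n = {(i, j). i \<in> {1..n} \<and> j \<in> {1..n} \<and> i \<noteq> j}"

definition schubert :: "nat \<Rightarrow> nat \<Rightarrow> nat \<Rightarrow> (cvec \<times> cvec) set" where
  "schubert n i j = {(x, y) \<in> Xpts n. (\<forall>k. i < k \<and> k \<le> n \<longrightarrow> x k = 0)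
                                    \<and> (\<forall>k. 1 \<le> k \<and> k < j \<longrightarrow> y k = 0)}"

definition Ddiv :: "nat \<Rightarrow> nat \<Rightarrow> (cvec \<times> cvec) set" where
  "Ddiv n k = (if k = 1 then {(x, y) \<in> Xpts n. x 1 = 0} else {(x, y) \<in> Xpts n. y n = 0})"

definition dcomp :: "nat \<times> nat \<Rightarrow> nat \<Rightarrow> nat" where
  "dcomp d k = (if k = 1 then fst d else snd d)"

(* points of P^1 : nonzero pairs (s,t); a binary form of degree e with coefficients a *)
definition form_eval :: "nat \<Rightarrow> (nat \<Rightarrow> complex) \<Rightarrow> complex \<times> complex \<Rightarrow> complex" where
  "form_eval e a z = (\<Sum>k\<le>e. a k * fst z ^ k * snd z ^ (e - k))"

definition curve_eval :: "nat \<Rightarrow> (nat \<Rightarrow> nat \<Rightarrow> complex) \<Rightarrow> complex \<times> complex \<Rightarrow> cvec" where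
  "curve_eval e F z = (\<lambda>i. form_eval e (F i) z)"

definition p1_distinct :: "complex \<times> complex \<Rightarrow> complex \<times> complex \<Rightarrow> bool" where
  "p1_distinct z w \<longleftrightarrow> fst z * snd w \<noteq> snd z * fst w"

(* a morphism P^1 -> X given by n binary forms of degree e1 (for p_1) and n binary forms
   of degree e2 (for p_2), without common zeros; p_1 o f has degree e1, p_2 o f degree e2 *)
definition is_morphism :: "nat \<Rightarrow> nat \<Rightarrow> nat \<Rightarrow> (nat \<Rightarrow> nat \<Rightarrow> complex) \<Rightarrow> (nat \<Rightarrow> nat \<Rightarrow> complex) \<Rightarrow> bool" where
  "is_morphism n e1 e2 F G \<longleftrightarrow>
     (\<forall>i k. (i < 1 \<or> n < i) \<longrightarrow> F i k = 0 \<and> G i k = 0) \<and>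
     (\<forall>z. z \<noteq> (0, 0) \<longrightarrow> (curve_eval e1 F z, curve_eval e2 G z) \<in> Xpts n)"

(* ---------- genus 0 stable maps with 3 marked points ----------
   Domain: a tree of P^1's, components 0..<ncomp; every component c >= 1 is glued at its
   point qpt c to the point ppt c of its parent component par c < c (every finite tree
   admits such an ordering). *)

record smap =
  ncomp :: nat
  cdeg :: "nat \<Rightarrow> nat \<times> nat"
  cF :: "nat \<Rightarrow> nat \<Rightarrow> nat \<Rightarrow> complex"
  cG :: "nat \<Rightarrow> nat \<Rightarrow> nat \<Rightarrow> complex"
  par :: "nat \<Rightarrow> nat"
  ppt :: "nat \<Rightarrow> complex \<times> complex"
  qpt :: "nat \<Rightarrow> complex \<times> complex"
  mcomp :: "nat \<Rightarrow> nat"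
  mpt :: "nat \<Rightarrow> complex \<times> complex"

datatype special = Up | Down nat | Mark nat

definition specials :: "smap \<Rightarrow> nat \<Rightarrow> special set" where
  "specials f c = (if 1 \<le> c then {Up} else {}) \<union>
                  {Down c' | c'. 1 \<le> c' \<and> c' < ncomp f \<and> par f c' = c} \<union>
                  {Mark j | j. j \<in> {1, 2, 3} \<and> mcomp f j = c}"

fun special_pt :: "smap \<Rightarrow> nat \<Rightarrow> special \<Rightarrow> complex \<times> complex" where
  "special_pt f c Up = qpt f c"
| "special_pt f c (Down c') = ppt f c'"
| "special_pt f c (Mark j) = mpt f j"

definition cval :: "smap \<Rightarrow> nat \<Rightarrow> complex \<times> complex \<Rightarrow> cvec \<times> cvec" where
  "cval f c z = (curve_eval (fst (cdeg f c)) (cF f c) z, curve_eval (snd (cdeg f c)) (cG f c) z)"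

definition is_stable_map :: "nat \<Rightarrow> nat \<times> nat \<Rightarrow> smap \<Rightarrow> bool" where
  "is_stable_map n d f \<longleftrightarrow>
     ncomp f \<ge> 1 \<and>
     (\<forall>c < ncomp f. is_morphism n (fst (cdeg f c)) (snd (cdeg f c)) (cF f c) (cG f c)) \<and>
     (\<Sum>c<ncomp f. fst (cdeg f c)) = fst d \<and>
     (\<Sum>c<ncomp f. snd (cdeg f c)) = snd d \<and>
     (\<forall>c. 1 \<le> c \<and> c < ncomp f \<longrightarrow>
          par f c < c \<and> qpt f c \<noteq> (0, 0) \<and> ppt f c \<noteq> (0, 0) \<and>
          pt_eq (cval f c (qpt f c)) (cval f (par f c) (ppt f c))) \<and>
     (\<forall>j \<in> {1, 2, 3}. mcomp f j < ncomp f \<and> mpt f j \<noteq> (0, 0)) \<and>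
     (\<forall>c < ncomp f. \<forall>l \<in> specials f c. \<forall>l' \<in> specials f c.
          l \<noteq> l' \<longrightarrow> p1_distinct (special_pt f c l) (special_pt f c l')) \<and>
     (\<forall>c < ncomp f. cdeg f c = (0, 0) \<longrightarrow> card (specials f c) \<ge> 3)"

definition ev :: "smap \<Rightarrow> nat \<Rightarrow> cvec \<times> cvec" where
  "ev f j = cval f (mcomp f j) (mpt f j)"

definition Gamma1 :: "nat \<Rightarrow> nat \<times> nat \<Rightarrow> (cvec \<times> cvec) set \<Rightarrow> (cvec \<times> cvec) set" where
  "Gamma1 n d X1 = {p \<in> Xpts n. \<exists>f. is_stable_map n d f \<and>
       (\<exists>a \<in> X1. pt_eq (ev f 1) a) \<and> pt_eq (ev f 2) p}"

definition Gamma2 :: "nat \<Rightarrow> nat \<times> nat \<Rightarrow> (cvec \<times> cvec) set \<Rightarrow> (cvec \<times> cvec) set \<Rightarrow> (cvec \<times> cvec) set" where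
  "Gamma2 n d X1 X2 = {p \<in> Xpts n. \<exists>f. is_stable_map n d f \<and>
       (\<exists>a \<in> X1. pt_eq (ev f 1) a) \<and> (\<exists>b \<in> X2. pt_eq (ev f 2) b) \<and> pt_eq (ev f 3) p}"

end

theory Submission
  imports Defs "HOL-Computational_Algebra.Fundamental_Theorem_Algebra"
begin


lemma pt_eq_refl: "pt_eq v v"
  unfolding pt_eq_def proj_eq_def by (auto intro!: exI[of _ 1])

lemma proj_eq_sym: "proj_eq x y \<Longrightarrow> proj_eq y x"
proof -
  assume "proj_eq x y"
  then obtain c where c: "c \<noteq> 0" "y = (\<lambda>k. c * x k)" unfolding proj_eq_def by auto
  then have "x = (\<lambda>k. inverse c * y k)" by (auto simp: fun_eq_iff)
  then show ?thesis using c unfolding proj_eq_def by (intro exI[of _ "inverse c"]) auto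
qed

lemma pt_eq_sym: "pt_eq v w \<Longrightarrow> pt_eq w v"
  unfolding pt_eq_def using proj_eq_sym by blast

lemma proj_eq_trans: "proj_eq x y \<Longrightarrow> proj_eq y z \<Longrightarrow> proj_eq x z"
proof -
  assume "proj_eq x y" "proj_eq y z"
  then obtain c c' where c: "c \<noteq> 0" "y = (\<lambda>k. c * x k)" "c' \<noteq> 0" "z = (\<lambda>k. c' * y k)"
    unfolding proj_eq_def by auto
  then have "z = (\<lambda>k. (c' * c) * x k)" by (auto simp: fun_eq_iff)
  then show ?thesis using c unfolding proj_eq_def by (intro exI[of _ "c' * c"]) auto
qed

lemma pt_eq_trans: "pt_eq u v \<Longrightarrow> pt_eq v w \<Longrightarrow> pt_eq u w"
  unfolding pt_eq_def using proj_eq_trans by blast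

definition goodsp :: "smap \<Rightarrow> nat \<Rightarrow> special set \<Rightarrow> bool" where
  "goodsp f c S \<longleftrightarrow> (\<forall>l\<in>S. \<forall>l'\<in>S. l \<noteq> l' \<longrightarrow> p1_distinct (special_pt f c l) (special_pt f c l'))
     \<and> (cdeg f c = (0,0) \<longrightarrow> card S \<ge> 3)"

lemma goodsp_transfer:
  assumes "bij_betw h S' S" "\<And>l. l \<in> S' \<Longrightarrow> special_pt f' c' l = special_pt f c (h l)"
    "cdeg f' c' = cdeg f c" "goodsp f c S"
  shows "goodsp f' c' S'"
proof -
  have inj: "inj_on h S'" and im: "h ` S' = S" using assms(1) by (auto simp: bij_betw_def)
  have "card S' = card S" using bij_betw_same_card[OF assms(1)] .
  moreover have "\<forall>l\<in>S'. \<forall>l'\<in>S'. l \<noteq> l' \<longrightarrow> p1_distinct (special_pt f' c' l) (special_pt f' c' l')"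
  proof (intro ballI impI)
    fix l l' assume l: "l \<in> S'" "l' \<in> S'" "l \<noteq> l'"
    then have "h l \<noteq> h l'" using inj by (auto dest: inj_onD)
    moreover have "h l \<in> S" "h l' \<in> S" using l im by auto
    ultimately show "p1_distinct (special_pt f' c' l) (special_pt f' c' l')"
      using assms(2,4) l unfolding goodsp_def by auto
  qed
  ultimately show ?thesis using assms(3,4) unfolding goodsp_def by auto
qed

definition aspecials :: "nat set \<Rightarrow> nat set \<Rightarrow> nat \<Rightarrow> smap \<Rightarrow> nat \<Rightarrow> special set" where
  "aspecials M V r f c = (if c \<noteq> r then {Up} else {}) \<union>
     {Down c' | c'. c' \<in> V \<and> c' \<noteq> r \<and> par f c' = c} \<union> {Mark j | j. j \<in> M \<and> mcomp f j = c}"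

definition astable :: "nat \<Rightarrow> nat \<times> nat \<Rightarrow> nat set \<Rightarrow> nat set \<Rightarrow> nat \<Rightarrow> (nat \<Rightarrow> real) \<Rightarrow> smap \<Rightarrow> bool" where
  "astable n d M V r rk f \<longleftrightarrow> finite V \<and> r \<in> V \<and>
     (\<forall>c\<in>V. is_morphism n (fst (cdeg f c)) (snd (cdeg f c)) (cF f c) (cG f c)) \<and>
     (\<Sum>c\<in>V. fst (cdeg f c)) = fst d \<and> (\<Sum>c\<in>V. snd (cdeg f c)) = snd d \<and>
     (\<forall>c\<in>V. c \<noteq> r \<longrightarrow> par f c \<in> V \<and> rk (par f c) < rk c \<and> qpt f c \<noteq> (0,0) \<and> ppt f c \<noteq> (0,0)
        \<and> pt_eq (cval f c (qpt f c)) (cval f (par f c) (ppt f c))) \<and>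
     (\<forall>j\<in>M. mcomp f j \<in> V \<and> mpt f j \<noteq> (0,0)) \<and>
     (\<forall>c\<in>V. goodsp f c (aspecials M V r f c))"

fun map_sp :: "(nat \<Rightarrow> nat) \<Rightarrow> special \<Rightarrow> special" where
  "map_sp h Up = Up" | "map_sp h (Down x) = Down (h x)" | "map_sp h (Mark j) = Mark j"

lemma embed:
  assumes "is_stable_map n d f"
  shows "astable n d {1,2,3} {0..<ncomp f} 0 real f"
proof -
  have sp: "aspecials {1,2,3} {0..<ncomp f} 0 f c = specials f c" for c
    unfolding aspecials_def specials_def by auto
  have s1: "(\<Sum>c\<in>{0..<ncomp f}. fst (cdeg f c)) = fst d" "(\<Sum>c\<in>{0..<ncomp f}. snd (cdeg f c)) = snd d"
    using assms unfolding is_stable_map_def by (auto simp: lessThan_atLeast0)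
  have A: "ncomp f \<ge> 1"
     "\<forall>c < ncomp f. is_morphism n (fst (cdeg f c)) (snd (cdeg f c)) (cF f c) (cG f c)"
     "\<forall>c. 1 \<le> c \<and> c < ncomp f \<longrightarrow>
          par f c < c \<and> qpt f c \<noteq> (0, 0) \<and> ppt f c \<noteq> (0, 0) \<and>
          pt_eq (cval f c (qpt f c)) (cval f (par f c) (ppt f c))"
     "\<forall>j \<in> {1, 2, 3}. mcomp f j < ncomp f \<and> mpt f j \<noteq> (0, 0)"
     "\<forall>c < ncomp f. \<forall>l \<in> specials f c. \<forall>l' \<in> specials f c.
          l \<noteq> l' \<longrightarrow> p1_distinct (special_pt f c l) (special_pt f c l')"
     "\<forall>c < ncomp f. cdeg f c = (0, 0) \<longrightarrow> card (specials f c) \<ge> 3"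
    using assms unfolding is_stable_map_def by auto
  have B: "\<forall>c\<in>{0..<ncomp f}. c \<noteq> 0 \<longrightarrow> par f c \<in> {0..<ncomp f} \<and> real (par f c) < real c \<and> qpt f c \<noteq> (0,0) \<and> ppt f c \<noteq> (0,0)
        \<and> pt_eq (cval f c (qpt f c)) (cval f (par f c) (ppt f c))"
  proof (intro ballI impI)
    fix c assume "c \<in> {0..<ncomp f}" "c \<noteq> 0"
    then show "par f c \<in> {0..<ncomp f} \<and> real (par f c) < real c \<and> qpt f c \<noteq> (0,0) \<and> ppt f c \<noteq> (0,0)
        \<and> pt_eq (cval f c (qpt f c)) (cval f (par f c) (ppt f c))" using A(3)[rule_format, of c] by auto
  qed
  have C: "\<forall>j\<in>{1,2,3}. mcomp f j \<in> {0..<ncomp f} \<and> mpt f j \<noteq> (0,0)" using A(4) by auto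
  have D: "\<forall>c\<in>{0..<ncomp f}. goodsp f c (aspecials {1,2,3} {0..<ncomp f} 0 f c)"
    unfolding goodsp_def sp using A(5,6) by auto
  show ?thesis unfolding astable_def using A(1,2) B C D s1 by auto
qed

lemma ev_cong:
  assumes "cdeg g i = cdeg f c" "cF g i = cF f c" "cG g i = cG f c" "mcomp g j = i" "mcomp f j = c" "mpt g j = mpt f j"
  shows "ev g j = ev f j"
  using assms unfolding ev_def cval_def by simp

lemma rank_root:
  assumes "astable n d M V r rk f" "c \<in> V" "c \<noteq> r"
  shows "rk r < rk c"
proof -
  have "\<forall>c\<in>V. c \<noteq> r \<longrightarrow> rk (par f c) < rk c \<and> par f c \<in> V" using assms(1) unfolding astable_def by auto
  have fin: "finite V" using assms(1) unfolding astable_def by auto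
  show ?thesis using assms(2,3)
  proof (induction "card {x\<in>V. rk x < rk c}" arbitrary: c rule: less_induct)
    case less
    have p: "par f c \<in> V" "rk (par f c) < rk c" using assms(1) less.prems unfolding astable_def by auto
    show ?case
    proof (cases "par f c = r")
      case True then show ?thesis using p by simp
    next
      case False
      have "{x\<in>V. rk x < rk (par f c)} \<subset> {x\<in>V. rk x < rk c}"
        using p by auto
      then have "card {x\<in>V. rk x < rk (par f c)} < card {x\<in>V. rk x < rk c}"
        using fin by (intro psubset_card_mono) auto
      from less.hyps[OF this p(1) False] p show ?thesis by simp
    qed
  qed
qed

lemma finite_aspecials: "finite V \<Longrightarrow> finite M \<Longrightarrow> finite (aspecials M V r f c)"
proof -
  assume "finite V" "finite M"
  have "{Down c' | c'. c' \<in> V \<and> c' \<noteq> r \<and> par f c' = c} \<subseteq> Down ` V" by auto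
  moreover have "{Mark j | j. j \<in> M \<and> mcomp f j = c} \<subseteq> Mark ` M" by auto
  ultimately show ?thesis unfolding aspecials_def using \<open>finite V\<close> \<open>finite M\<close>
    by (auto intro: finite_subset)
qed



lemma asp_mem[simp]:
  "Up \<in> aspecials M V r f c \<longleftrightarrow> c \<noteq> r"
  "Down x \<in> aspecials M V r f c \<longleftrightarrow> x \<in> V \<and> x \<noteq> r \<and> par f x = c"
  "Mark j \<in> aspecials M V r f c \<longleftrightarrow> j \<in> M \<and> mcomp f j = c"
  by (auto simp: aspecials_def)

lemma sp_mem[simp]:
  "Up \<in> specials f c \<longleftrightarrow> 1 \<le> c"
  "Down x \<in> specials f c \<longleftrightarrow> 1 \<le> x \<and> x < ncomp f \<and> par f x = c"
  "Mark j \<in> specials f c \<longleftrightarrow> j \<in> {1,2,3} \<and> mcomp f j = c"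
  by (auto simp: specials_def)

lemma goodsp_transfer2:
  assumes "bij_betw h S S'" "\<And>l. l \<in> S \<Longrightarrow> special_pt f' c' (h l) = special_pt f c l"
    "cdeg f' c' = cdeg f c" "goodsp f c S"
  shows "goodsp f' c' S'"
proof -
  have "card S' = card S" using bij_betw_same_card[OF assms(1)] by simp
  moreover have "\<forall>l\<in>S'. \<forall>l'\<in>S'. l \<noteq> l' \<longrightarrow> p1_distinct (special_pt f' c' l) (special_pt f' c' l')"
  proof (intro ballI impI)
    fix l l' assume l: "l \<in> S'" "l' \<in> S'" "l \<noteq> l'"
    obtain m where m: "m \<in> S" "l = h m" using l(1) assms(1) by (auto simp: bij_betw_def)
    obtain m' where m': "m' \<in> S" "l' = h m'" using l(2) assms(1) by (auto simp: bij_betw_def)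
    have "m \<noteq> m'" using m m' l by auto
    then show "p1_distinct (special_pt f' c' l) (special_pt f' c' l')"
      using assms(2,4) m m' unfolding goodsp_def by auto
  qed
  ultimately show ?thesis using assms(3,4) unfolding goodsp_def by auto
qed

lemma serialize:
  assumes st: "astable n d {1,2,3} V r rk f"
  shows "\<exists>g. is_stable_map n d g \<and> (\<forall>j\<in>{1,2,3}. ev g j = ev f j)"
proof -
  have fin: "finite V" and rV: "r \<in> V" using st unfolding astable_def by auto
  define xs where "xs = sort_key rk (sorted_list_of_set (V - {r}))"
  define L where "L = r # xs"
  define N where "N = length L"
  have sxs: "set xs = V - {r}" "distinct xs" unfolding xs_def using fin by auto
  have dL: "distinct L" and sL: "set L = V" unfolding L_def using sxs rV by auto
  have L0: "L ! 0 = r" unfolding L_def by simp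
  have bij: "bij_betw (nth L) {0..<N} V"
    using bij_betw_nth[OF dL _ sL[symmetric]] unfolding N_def by (simp add: lessThan_atLeast0)
  define idx where "idx = the_inv_into {0..<N} (nth L)"
  have inj: "inj_on (nth L) {0..<N}" using bij by (auto simp: bij_betw_def)
  have idx1: "idx x < N" "L ! (idx x) = x" if "x \<in> V" for x
  proof -
    have "x \<in> (nth L) ` {0..<N}" using bij that by (auto simp: bij_betw_def)
    then show "idx x < N" "L ! (idx x) = x" unfolding idx_def
      using the_inv_into_into[OF inj, of x "{0..<N}"] f_the_inv_into_f[OF inj] by auto
  qed
  have idx2: "idx (L ! i) = i" if "i < N" for i
    unfolding idx_def using the_inv_into_f_f[OF inj] that by auto
  have Lin: "L ! i \<in> V" if "i < N" for i using that sL N_def nth_mem by blast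
  have srt: "sorted (map rk xs)" unfolding xs_def by simp
  have sorted: "rk (L!i) \<le> rk (L!j)" if "1 \<le> i" "i \<le> j" "j < N" for i j
  proof -
    have "L ! i = xs ! (i - 1)" "L ! j = xs ! (j - 1)" unfolding L_def using that by auto
    moreover have "(map rk xs) ! (i - 1) \<le> (map rk xs) ! (j - 1)"
      using sorted_nth_mono[OF srt, of "i - 1" "j - 1"] that unfolding N_def L_def by auto
    ultimately show ?thesis using that unfolding N_def L_def by auto
  qed
  have idxr: "idx r = 0" using idx2[of 0] L0 unfolding N_def L_def by simp
  have idxnr: "idx x \<noteq> 0" if "x \<in> V" "x \<noteq> r" for x using idx1[OF that(1)] that L0 by metis
  have pr: "par f x \<in> V" "rk (par f x) < rk x" if "x \<in> V" "x \<noteq> r" for x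
    using st that unfolding astable_def by auto
  have ord: "idx (par f x) < idx x" if "x \<in> V" "x \<noteq> r" for x
  proof (rule ccontr)
    assume "\<not> idx (par f x) < idx x"
    then have "idx x \<le> idx (par f x)" by simp
    then have "rk (L ! idx x) \<le> rk (L ! idx (par f x))"
      using sorted[of "idx x" "idx (par f x)"] idxnr[OF that] idx1[OF pr(1)[OF that]] by auto
    then show False using pr[OF that] idx1 that by (metis idx1(2) not_less pr(1)[OF that])
  qed
  define g where "g = \<lparr>ncomp = N, cdeg = \<lambda>i. cdeg f (L!i), cF = \<lambda>i. cF f (L!i), cG = \<lambda>i. cG f (L!i),
     par = \<lambda>i. idx (par f (L!i)), ppt = \<lambda>i. ppt f (L!i), qpt = \<lambda>i. qpt f (L!i),
     mcomp = \<lambda>j. idx (mcomp f j), mpt = mpt f\<rparr>"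
  have cv: "cval g i z = cval f (L!i) z" for i z unfolding cval_def g_def by simp
  have mV: "mcomp f j \<in> V" "mpt f j \<noteq> (0,0)" if "j \<in> {1,2,3}" for j
    using st that unfolding astable_def by auto
  have sp: "specials g i = map_sp idx ` aspecials {1,2,3} V r f (L!i)" if "i < N" for i
  proof
    show "specials g i \<subseteq> map_sp idx ` aspecials {1,2,3} V r f (L!i)"
    proof
      fix l assume l: "l \<in> specials g i"
      show "l \<in> map_sp idx ` aspecials {1,2,3} V r f (L!i)"
      proof (cases l)
        case Up
        then have "1 \<le> i" using l by (auto split: if_splits)
        then have "L ! i \<noteq> r" using idx2[OF that] idxr by auto
        then show ?thesis using Up by (auto intro!: image_eqI[of _ _ Up])
      next
        case (Down c')
        then have c': "1 \<le> c'" "c' < N" "idx (par f (L!c')) = i" using l unfolding g_def by (auto split: if_splits)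
        have "L ! c' \<noteq> r" using idx2[OF c'(2)] idxr c' by auto
        moreover have "par f (L!c') = L ! i" using c' idx1 pr[OF Lin[OF c'(2)]] \<open>L ! c' \<noteq> r\<close> by metis
        ultimately have "Down (L!c') \<in> aspecials {1,2,3} V r f (L!i)"
          using Lin[OF c'(2)] by auto
        moreover have "map_sp idx (Down (L!c')) = l" using Down idx2[OF c'(2)] by simp
        ultimately show ?thesis by (metis image_eqI)
      next
        case (Mark j)
        then have j: "j \<in> {1,2,3}" "idx (mcomp f j) = i" using l unfolding g_def by (auto split: if_splits)
        then have "mcomp f j = L ! i" using idx1 mV by metis
        then have "Mark j \<in> aspecials {1,2,3} V r f (L!i)" using j by auto
        then show ?thesis using Mark by (metis image_eqI map_sp.simps(3))
      qed
    qed
  next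
    show "map_sp idx ` aspecials {1,2,3} V r f (L!i) \<subseteq> specials g i"
    proof
      fix l assume "l \<in> map_sp idx ` aspecials {1,2,3} V r f (L!i)"
      then obtain m where m: "m \<in> aspecials {1,2,3} V r f (L!i)" "l = map_sp idx m" by auto
      show "l \<in> specials g i"
      proof (cases m)
        case Up
        then have "L ! i \<noteq> r" using m by (auto split: if_splits)
        then have "1 \<le> i" using L0 by (cases i) auto
        then show ?thesis using m Up by auto
      next
        case (Down x)
        then have x: "x \<in> V" "x \<noteq> r" "par f x = L ! i" using m by (auto split: if_splits)
        have "1 \<le> idx x" "idx x < N" using idxnr[OF x(1,2)] idx1[OF x(1)] by auto
        moreover have "par g (idx x) = i" unfolding g_def using idx1[OF x(1)] x idx2[OF that] by simp
        ultimately show ?thesis using m Down unfolding g_def by (auto split: if_splits)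
      next
        case (Mark j)
        then have "j \<in> {1,2,3}" "mcomp f j = L ! i" using m by (auto split: if_splits)
        then show ?thesis using m Mark idx2[OF that] unfolding g_def by (auto split: if_splits)
      qed
    qed
  qed
  have injm: "inj_on (map_sp idx) (aspecials {1,2,3} V r f c)" for c
  proof
    fix a b assume a: "a \<in> aspecials {1,2,3} V r f c" and b: "b \<in> aspecials {1,2,3} V r f c"
      and e: "map_sp idx a = map_sp idx b"
    show "a = b"
    proof (cases a)
      case (Down x)
      then have "x \<in> V" using a by auto
      then show ?thesis using e Down b idx1 by (cases b) (auto, metis)
    qed (use e in \<open>cases b; auto\<close>)+
  qed
  have spt: "special_pt g i (map_sp idx l) = special_pt f (L!i) l"
    if "l \<in> aspecials {1,2,3} V r f (L!i)" for i l
  proof (cases l)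
    case (Down x)
    then have "x \<in> V" using that by auto
    then show ?thesis using Down idx1 unfolding g_def by simp
  qed (auto simp: g_def)
  have good: "goodsp f c (aspecials {1,2,3} V r f c)" if "c \<in> V" for c
    using st that unfolding astable_def by auto
  have goodg: "goodsp g i (specials g i)" if "i < N" for i
  proof (rule goodsp_transfer2[of "map_sp idx" "aspecials {1,2,3} V r f (L!i)"])
    show "bij_betw (map_sp idx) (aspecials {1, 2, 3} V r f (L ! i)) (specials g i)"
      using injm sp[OF that] unfolding bij_betw_def by auto
    show "special_pt g i (map_sp idx l) = special_pt f (L ! i) l" if "l \<in> aspecials {1, 2, 3} V r f (L ! i)" for l
      using spt that .
    show "cdeg g i = cdeg f (L ! i)" by (simp add: g_def)
    show "goodsp f (L ! i) (aspecials {1, 2, 3} V r f (L ! i))" using good Lin that by blast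
  qed
  have sums: "(\<Sum>c<ncomp g. fst (cdeg g c)) = fst d" "(\<Sum>c<ncomp g. snd (cdeg g c)) = snd d"
  proof -
    have "(\<Sum>c<ncomp g. fst (cdeg g c)) = (\<Sum>c\<in>{0..<N}. fst (cdeg f (L!c)))"
      unfolding g_def by (simp add: lessThan_atLeast0)
    also have "\<dots> = (\<Sum>c\<in>V. fst (cdeg f c))" using sum.reindex_bij_betw[OF bij] .
    finally show "(\<Sum>c<ncomp g. fst (cdeg g c)) = fst d" using st unfolding astable_def by simp
    have "(\<Sum>c<ncomp g. snd (cdeg g c)) = (\<Sum>c\<in>{0..<N}. snd (cdeg f (L!c)))"
      unfolding g_def by (simp add: lessThan_atLeast0)
    also have "\<dots> = (\<Sum>c\<in>V. snd (cdeg f c))" using sum.reindex_bij_betw[OF bij] .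
    finally show "(\<Sum>c<ncomp g. snd (cdeg g c)) = snd d" using st unfolding astable_def by simp
  qed
  have N1: "ncomp g \<ge> 1" unfolding g_def N_def L_def by simp
  have morph: "\<forall>c < ncomp g. is_morphism n (fst (cdeg g c)) (snd (cdeg g c)) (cF g c) (cG g c)"
    using st Lin unfolding astable_def g_def by auto
  have tree: "\<forall>c. 1 \<le> c \<and> c < ncomp g \<longrightarrow>
          par g c < c \<and> qpt g c \<noteq> (0, 0) \<and> ppt g c \<noteq> (0, 0) \<and>
          pt_eq (cval g c (qpt g c)) (cval g (par g c) (ppt g c))"
  proof (intro allI impI)
    fix c assume c: "1 \<le> c \<and> c < ncomp g"
    then have c'1: "c < N" unfolding g_def by simp
    then have c': "c < N" "L ! c \<noteq> r" using idx2[OF c'1] idxr c by auto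
    have x: "L ! c \<in> V" using Lin c' by auto
    have A: "qpt f (L!c) \<noteq> (0,0) \<and> ppt f (L!c) \<noteq> (0,0) \<and>
        pt_eq (cval f (L!c) (qpt f (L!c))) (cval f (par f (L!c)) (ppt f (L!c)))"
      using st x c' unfolding astable_def by auto
    have "par g c < c" using ord[OF x c'(2)] idx2[OF c'(1)] unfolding g_def by simp
    moreover have "cval g (par g c) (ppt g c) = cval f (par f (L!c)) (ppt f (L!c))"
      unfolding cv using idx1[OF pr(1)[OF x c'(2)]] unfolding g_def by simp
    ultimately show "par g c < c \<and> qpt g c \<noteq> (0, 0) \<and> ppt g c \<noteq> (0, 0) \<and>
          pt_eq (cval g c (qpt g c)) (cval g (par g c) (ppt g c))"
      using A unfolding cv by (simp add: g_def)
  qed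
  have marks: "\<forall>j \<in> {1, 2, 3}. mcomp g j < ncomp g \<and> mpt g j \<noteq> (0, 0)"
    using mV idx1 unfolding g_def by auto
  have sg: "is_stable_map n d g"
    unfolding is_stable_map_def using N1 morph sums tree marks goodg unfolding goodsp_def
    by (auto simp: g_def)
  have "ev g j = ev f j" if "j \<in> {1,2,3}" for j
    unfolding ev_def cv using idx1[OF mV(1)[OF that]] by (simp add: g_def)
  then show ?thesis using sg by blast
qed



definition kval :: "nat \<Rightarrow> nat \<Rightarrow> cvec \<times> cvec \<Rightarrow> complex" where
  "kval n k v = (if k = 1 then fst v 1 else snd v n)"

lemma Ddiv_iff: "v \<in> Ddiv n k \<longleftrightarrow> v \<in> Xpts n \<and> kval n k v = 0"
  unfolding Ddiv_def kval_def by (cases v) auto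

lemma kval_pt_eq: "pt_eq v w \<Longrightarrow> kval n k v = 0 \<longleftrightarrow> kval n k w = 0"
  unfolding pt_eq_def proj_eq_def kval_def by (cases v, cases w) auto

definition kdeg :: "nat \<Rightarrow> nat \<times> nat \<Rightarrow> nat" where
  "kdeg k e = (if k = 1 then fst e else snd e)"

lemma kval_deg0:
  assumes "kdeg k (cdeg f c) = 0"
  shows "kval n k (cval f c z) = kval n k (cval f c z')"
  using assms unfolding kdeg_def kval_def cval_def curve_eval_def form_eval_def by (auto split: if_splits)

lemma cval_Xpts:
  assumes "is_morphism n (fst (cdeg f c)) (snd (cdeg f c)) (cF f c) (cG f c)" "z \<noteq> (0,0)"
  shows "cval f c z \<in> Xpts n"
proof -
  from assms(1) have "\<forall>z. z \<noteq> (0,0) \<longrightarrow> (curve_eval (fst (cdeg f c)) (cF f c) z, curve_eval (snd (cdeg f c)) (cG f c) z) \<in> Xpts n"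
    unfolding is_morphism_def by blast
  then show ?thesis unfolding cval_def using assms(2) by blast
qed

lemma propagate:
  assumes st: "is_stable_map n d f" and d0: "dcomp d k = 0" and c: "c < ncomp f"
  shows "kval n k (cval f c z) = 0 \<longleftrightarrow> kval n k (cval f 0 z') = 0"
proof -
  have kd: "kdeg k (cdeg f c) = 0" if "c < ncomp f" for c
  proof -
    have "(\<Sum>c<ncomp f. kdeg k (cdeg f c)) = 0" using st d0 unfolding is_stable_map_def dcomp_def kdeg_def
      by (auto split: if_splits)
    then show ?thesis using that by simp
  qed
  show ?thesis using c
  proof (induction c arbitrary: z rule: less_induct)
    case (less c)
    show ?case
    proof (cases "c = 0")
      case True then show ?thesis using kval_deg0[OF kd] less.prems by metis
    next
      case False
      then have A: "par f c < c" "pt_eq (cval f c (qpt f c)) (cval f (par f c) (ppt f c))"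
        using st less.prems unfolding is_stable_map_def by auto
      have "kval n k (cval f c z) = 0 \<longleftrightarrow> kval n k (cval f c (qpt f c)) = 0"
        using kval_deg0[OF kd[OF less.prems]] by metis
      also have "\<dots> \<longleftrightarrow> kval n k (cval f (par f c) (ppt f c)) = 0" using kval_pt_eq[OF A(2)] .
      also have "\<dots> \<longleftrightarrow> kval n k (cval f 0 z') = 0" using less.IH[OF A(1)] A(1) less.prems by auto
      finally show ?thesis .
    qed
  qed
qed

definition sw23 :: "nat \<Rightarrow> nat" where "sw23 j = (if j = 2 then 3 else if j = 3 then 2 else j)"

lemma sw23_sw23[simp]: "sw23 (sw23 j) = j" unfolding sw23_def by auto

lemma swap_astable:
  assumes st: "astable n d {1,2,3} V r rk f"
  defines "f' \<equiv> f\<lparr>mcomp := mcomp f \<circ> sw23, mpt := mpt f \<circ> sw23\<rparr>"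
  shows "astable n d {1,2,3} V r rk f'" "ev f' 1 = ev f 1" "ev f' 2 = ev f 3" "ev f' 3 = ev f 2"
proof -
  define h where "h = (\<lambda>l. case l of Mark j \<Rightarrow> Mark (sw23 j) | _ \<Rightarrow> l)"
  have hh: "h (h l) = l" for l unfolding h_def by (cases l) auto
  have sp: "aspecials {1,2,3} V r f' c = h ` aspecials {1,2,3} V r f c" for c
  proof -
    have "l \<in> aspecials {1,2,3} V r f' c \<longleftrightarrow> h l \<in> aspecials {1,2,3} V r f c" for l
      by (cases l) (auto simp: f'_def h_def sw23_def)
    then show ?thesis using hh by (auto intro: image_eqI[of _ h "h x" for x])
  qed
  have bij: "bij_betw h (aspecials {1,2,3} V r f c) (aspecials {1,2,3} V r f' c)" for c
    unfolding sp by (rule inj_on_imp_bij_betw) (metis hh inj_onI)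
  have spt: "special_pt f' c (h l) = special_pt f c l" for c l
    by (cases l) (auto simp: h_def f'_def)
  have good: "goodsp f' c (aspecials {1,2,3} V r f' c)" if "c \<in> V" for c
    using goodsp_transfer2[OF bij spt] st that unfolding astable_def by (auto simp: f'_def)
  have cv: "cval f' c z = cval f c z" for c z unfolding cval_def f'_def by simp
  have mk: "\<forall>j\<in>{1,2,3}. mcomp f' j \<in> V \<and> mpt f' j \<noteq> (0,0)"
    using st unfolding astable_def f'_def sw23_def by auto
  show "astable n d {1,2,3} V r rk f'"
    using st mk good unfolding astable_def cv by (auto simp: f'_def)
  show "ev f' 1 = ev f 1" "ev f' 2 = ev f 3" "ev f' 3 = ev f 2"
    unfolding ev_def cv by (auto simp: f'_def sw23_def)
qed

lemma swap_stable:
  assumes "is_stable_map n d f"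
  shows "\<exists>g. is_stable_map n d g \<and> ev g 1 = ev f 1 \<and> ev g 2 = ev f 3 \<and> ev g 3 = ev f 2"
proof -
  note A = swap_astable[OF embed[OF assms]]
  from serialize[OF A(1)] obtain g where "is_stable_map n d g"
    "\<forall>j\<in>{1,2,3}. ev g j = ev (f\<lparr>mcomp := mcomp f \<circ> sw23, mpt := mpt f \<circ> sw23\<rparr>) j" by blast
  then show ?thesis using A(2-4) by auto
qed

lemma ev_Xpts:
  assumes "is_stable_map n d f" "j \<in> {1,2,3}"
  shows "ev f j \<in> Xpts n"
  using assms unfolding is_stable_map_def ev_def by (auto intro!: cval_Xpts)

lemma G2_sub_G1: "Gamma2 n d X D \<subseteq> Gamma1 n d X"
proof
  fix p assume "p \<in> Gamma2 n d X D"
  then obtain f a where f: "p \<in> Xpts n" "is_stable_map n d f" "a \<in> X" "pt_eq (ev f 1) a" "pt_eq (ev f 3) p"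
    unfolding Gamma2_def by auto
  from swap_stable[OF f(2)] obtain g where "is_stable_map n d g" "ev g 1 = ev f 1" "ev g 2 = ev f 3" by auto
  then have "is_stable_map n d g \<and> (\<exists>x\<in>X. pt_eq (ev g 1) x) \<and> pt_eq (ev g 2) p" using f by auto
  then show "p \<in> Gamma1 n d X" using f(1) unfolding Gamma1_def by blast
qed

lemma deg0_case:
  assumes d0: "dcomp d k = 0"
  shows "Gamma2 n d X (Ddiv n k) = Gamma1 n d X \<inter> Ddiv n k"
proof
  show "Gamma2 n d X (Ddiv n k) \<subseteq> Gamma1 n d X \<inter> Ddiv n k"
  proof
    fix p assume p: "p \<in> Gamma2 n d X (Ddiv n k)"
    then obtain f b where f: "p \<in> Xpts n" "is_stable_map n d f" "b \<in> Ddiv n k" "pt_eq (ev f 2) b" "pt_eq (ev f 3) p"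
      unfolding Gamma2_def by auto
    have m: "mcomp f j < ncomp f" if "j \<in> {1,2,3}" for j using f(2) that unfolding is_stable_map_def by auto
    have "kval n k (ev f 2) = 0" using kval_pt_eq[OF f(4)] f(3) by (simp add: Ddiv_iff)
    then have "kval n k (ev f 3) = 0" unfolding ev_def
      using propagate[OF f(2) d0 m[of 2], of "mpt f 2" "(1,0)"] propagate[OF f(2) d0 m[of 3], of "mpt f 3" "(1,0)"] by auto
    then have "kval n k p = 0" using kval_pt_eq[OF f(5)] by simp
    then show "p \<in> Gamma1 n d X \<inter> Ddiv n k" using f(1) p G2_sub_G1[of n d X "Ddiv n k"] by (auto simp: Ddiv_iff)
  qed
next
  show "Gamma1 n d X \<inter> Ddiv n k \<subseteq> Gamma2 n d X (Ddiv n k)"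
  proof
    fix p assume p: "p \<in> Gamma1 n d X \<inter> Ddiv n k"
    then obtain f a where f: "p \<in> Xpts n" "is_stable_map n d f" "a \<in> X" "pt_eq (ev f 1) a" "pt_eq (ev f 2) p"
      "kval n k p = 0"
      unfolding Gamma1_def by (auto simp: Ddiv_iff)
    have m: "mcomp f j < ncomp f" if "j \<in> {1,2,3}" for j using f(2) that unfolding is_stable_map_def by auto
    have "kval n k (ev f 2) = 0" using kval_pt_eq[OF f(5)] f(6) by simp
    then have "kval n k (ev f 3) = 0" unfolding ev_def
      using propagate[OF f(2) d0 m[of 2], of "mpt f 2" "(1,0)"] propagate[OF f(2) d0 m[of 3], of "mpt f 3" "(1,0)"] by auto
    then have b: "ev f 3 \<in> Ddiv n k" using ev_Xpts[OF f(2)] by (auto simp: Ddiv_iff)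
    from swap_stable[OF f(2)] obtain g where g: "is_stable_map n d g" "ev g 1 = ev f 1" "ev g 2 = ev f 3" "ev g 3 = ev f 2" by auto
    have "is_stable_map n d g \<and> (\<exists>x\<in>X. pt_eq (ev g 1) x) \<and> (\<exists>x\<in>Ddiv n k. pt_eq (ev g 2) x) \<and> pt_eq (ev g 3) p"
      using f g b pt_eq_refl[of "ev f 3"] by auto
    then show "p \<in> Gamma2 n d X (Ddiv n k)" unfolding Gamma2_def using f(1) by blast
  qed
qed



lemma p1_distinct_sym: "p1_distinct z w \<longleftrightarrow> p1_distinct w z"
  unfolding p1_distinct_def by (auto simp: mult.commute)

lemma form_eval_scale:
  "form_eval e a (l * s, l * t) = l ^ e * form_eval e a (s, t)"
proof -
  have "form_eval e a (l * s, l * t) = (\<Sum>k\<le>e. l ^ e * (a k * s ^ k * t ^ (e - k)))"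
    unfolding form_eval_def
  proof (rule sum.cong)
    fix k assume "k \<in> {..e}"
    then have "l ^ k * l ^ (e - k) = l ^ e" by (simp add: power_add[symmetric])
    then show "a k * fst (l * s, l * t) ^ k * snd (l * s, l * t) ^ (e - k) = l ^ e * (a k * s ^ k * t ^ (e - k))"
      by (simp add: power_mult_distrib algebra_simps)
  qed simp
  also have "\<dots> = l ^ e * form_eval e a (s, t)" unfolding form_eval_def by (simp add: sum_distrib_left)
  finally show ?thesis .
qed

lemma p1_prop:
  assumes "z \<noteq> (0,0)" "\<not> p1_distinct z w"
  shows "\<exists>l. w = (l * fst z, l * snd z)"
proof (cases "fst z = 0")
  case True
  then have "snd z \<noteq> 0" using assms(1) by (cases z) auto
  moreover have "fst w = 0" using assms(2) True \<open>snd z \<noteq> 0\<close> unfolding p1_distinct_def by auto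
  ultimately show ?thesis using True by (intro exI[of _ "snd w / snd z"]) (cases w, auto)
next
  case False
  have "fst z * snd w = snd z * fst w" using assms(2) unfolding p1_distinct_def by auto
  then have "snd w = fst w / fst z * snd z" using False by (simp add: field_simps)
  then show ?thesis using False by (intro exI[of _ "fst w / fst z"]) (cases w, auto)
qed

lemma kval_cval: "kval n k (cval f c z) = form_eval (kdeg k (cdeg f c)) (if k = 1 then cF f c 1 else cG f c n) z"
  unfolding kval_def cval_def kdeg_def curve_eval_def by auto

lemma kval_move:
  assumes "z \<noteq> (0,0)" "\<not> p1_distinct z w" "kval n k (cval f c z) = 0"
  shows "kval n k (cval f c w) = 0"
proof -
  obtain l where w: "w = (l * fst z, l * snd z)" using p1_prop[OF assms(1,2)] by blast
  show ?thesis using assms(3) unfolding kval_cval w form_eval_scale by (cases z) simp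
qed

lemma const_morph:
  assumes "v \<in> Xpts n"
  shows "is_morphism n 0 0 (\<lambda>i k. fst v i) (\<lambda>i k. snd v i)"
    and "curve_eval 0 (\<lambda>i k. fst v i) z = fst v" "curve_eval 0 (\<lambda>i k. snd v i) z = snd v"
proof -
  show ce: "curve_eval 0 (\<lambda>i k. fst v i) z = fst v" "curve_eval 0 (\<lambda>i k. snd v i) z = snd v" for z
    unfolding curve_eval_def form_eval_def by auto
  show "is_morphism n 0 0 (\<lambda>i k. fst v i) (\<lambda>i k. snd v i)"
    using assms unfolding is_morphism_def ce Xpts_def in_space_def by (cases v) auto
qed

lemma relabel_astable:
  assumes st: "astable n d M V r rk f"
  defines "f' \<equiv> f\<lparr>mcomp := mcomp f \<circ> sw23, mpt := mpt f \<circ> sw23\<rparr>"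
  shows "astable n d (sw23 ` M) V r rk f'" "\<And>j. ev f' j = ev f (sw23 j)"
proof -
  define h where "h = (\<lambda>l. case l of Mark j \<Rightarrow> Mark (sw23 j) | _ \<Rightarrow> l)"
  have hh: "h (h l) = l" for l unfolding h_def by (cases l) auto
  have swin: "sw23 j \<in> M \<longleftrightarrow> j \<in> sw23 ` M" for j by (metis image_iff sw23_sw23)
  have sp: "aspecials (sw23 ` M) V r f' c = h ` aspecials M V r f c" for c
  proof -
    have "l \<in> aspecials (sw23 ` M) V r f' c \<longleftrightarrow> h l \<in> aspecials M V r f c" for l
      by (cases l) (auto simp: f'_def h_def swin)
    then show ?thesis using hh by (auto intro: image_eqI[of _ h "h x" for x])
  qed
  have bij: "bij_betw h (aspecials M V r f c) (aspecials (sw23 ` M) V r f' c)" for c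
    unfolding sp by (rule inj_on_imp_bij_betw) (metis hh inj_onI)
  have spt: "special_pt f' c (h l) = special_pt f c l" for c l
    by (cases l) (auto simp: h_def f'_def)
  have good: "goodsp f' c (aspecials (sw23 ` M) V r f' c)" if "c \<in> V" for c
    using goodsp_transfer2[OF bij spt] st that unfolding astable_def by (auto simp: f'_def)
  have cv: "cval f' c z = cval f c z" for c z unfolding cval_def f'_def by simp
  have mk: "\<forall>j\<in>sw23 ` M. mcomp f' j \<in> V \<and> mpt f' j \<noteq> (0,0)"
    using st unfolding astable_def f'_def by auto
  show "astable n d (sw23 ` M) V r rk f'"
    using st mk good unfolding astable_def cv by (auto simp: f'_def)
  show "ev f' j = ev f (sw23 j)" for j
    unfolding ev_def cv by (auto simp: f'_def)
qed

lemma sp_nonzero: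
  assumes st: "astable n d M V r rk f" and c: "c \<in> V" and l: "l \<in> aspecials M V r f c"
  shows "special_pt f c l \<noteq> (0,0)"
  using st c l unfolding astable_def by (cases l) auto

lemma cval_upd_other:
  "b \<noteq> c \<Longrightarrow> cval (f\<lparr>cdeg := (cdeg f)(b := e), cF := (cF f)(b := F), cG := (cG f)(b := G), par := P, ppt := Q, qpt := R, mcomp := Mc, mpt := Mp\<rparr>) c z = cval f c z"
  unfolding cval_def by simp

lemma addD_A:
  assumes st: "astable n d {1,3} V r rk f" and c: "c \<in> V" and z0: "z0 \<noteq> (0,0)"
    and dist: "\<forall>l\<in>aspecials {1,3} V r f c. p1_distinct z0 (special_pt f c l)"
  defines "f' \<equiv> f\<lparr>mcomp := (mcomp f)(2 := c), mpt := (mpt f)(2 := z0)\<rparr>"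
  shows "astable n d {1,2,3} V r rk f'" "ev f' 1 = ev f 1" "ev f' 3 = ev f 3" "ev f' 2 = cval f c z0"
proof -
  have cv: "cval f' x z = cval f x z" for x z unfolding cval_def f'_def by simp
  have sp: "aspecials {1,2,3} V r f' x = aspecials {1,3} V r f x \<union> (if x = c then {Mark 2} else {})" for x
  proof -
    have "l \<in> aspecials {1,2,3} V r f' x \<longleftrightarrow> l \<in> aspecials {1,3} V r f x \<union> (if x = c then {Mark 2} else {})" for l
      by (cases l) (auto simp: f'_def)
    then show ?thesis by blast
  qed
  have fin: "finite V" using st unfolding astable_def by auto
  have n2: "Mark 2 \<notin> aspecials {1,3} V r f x" for x by simp
  have good: "goodsp f' x (aspecials {1,2,3} V r f' x)" if x: "x \<in> V" for x
  proof -
    have g0: "goodsp f x (aspecials {1,3} V r f x)" using st x unfolding astable_def by auto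
    have spt: "l \<in> aspecials {1,3} V r f x \<Longrightarrow> special_pt f' x l = special_pt f x l" for l
      by (cases l) (auto simp: f'_def)
    have spt2: "special_pt f' x (Mark 2) = z0" by (simp add: f'_def)
    have "card (aspecials {1,3} V r f x) \<le> card (aspecials {1,2,3} V r f' x)"
      unfolding sp by (rule card_mono) (auto simp: finite_aspecials fin)
    moreover have "\<forall>l\<in>aspecials {1,2,3} V r f' x. \<forall>l'\<in>aspecials {1,2,3} V r f' x. l \<noteq> l' \<longrightarrow>
        p1_distinct (special_pt f' x l) (special_pt f' x l')"
    proof (intro ballI impI)
      fix l l' assume l: "l \<in> aspecials {1,2,3} V r f' x" "l' \<in> aspecials {1,2,3} V r f' x" "l \<noteq> l'"
      show "p1_distinct (special_pt f' x l) (special_pt f' x l')"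
      proof (cases "l = Mark 2")
        case True
        then have "l' \<in> aspecials {1,3} V r f x" "x = c" using l unfolding sp by (auto split: if_splits)
        then show ?thesis using True dist spt spt2 by auto
      next
        case False
        note F = False
        then have l1: "l \<in> aspecials {1,3} V r f x" using l unfolding sp by (auto split: if_splits)
        show ?thesis
        proof (cases "l' = Mark 2")
          case True
          then have "x = c" using l unfolding sp by (auto split: if_splits)
          then show ?thesis using True dist spt spt2 l1 p1_distinct_sym by auto
        next
          case False
          then have "l' \<in> aspecials {1,3} V r f x" using l unfolding sp by (auto split: if_splits)
          then show ?thesis using l1 l(3) g0 spt unfolding goodsp_def by auto
        qed
      qed
    qed
    ultimately show ?thesis using g0 unfolding goodsp_def by (auto simp: f'_def)
  qed
  have mk: "\<forall>j\<in>{1,2,3}. mcomp f' j \<in> V \<and> mpt f' j \<noteq> (0,0)"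
    using st c z0 unfolding astable_def f'_def by auto
  show "astable n d {1,2,3} V r rk f'"
    using st mk good unfolding astable_def cv by (auto simp: f'_def)
  show "ev f' 1 = ev f 1" "ev f' 3 = ev f 3" "ev f' 2 = cval f c z0"
    unfolding ev_def cv by (auto simp: f'_def)
qed



lemma goodsp_id:
  assumes "goodsp f x S" "S' = S" "\<And>l. l \<in> S \<Longrightarrow> special_pt f' x l = special_pt f x l" "cdeg f' x = cdeg f x"
  shows "goodsp f' x S'"
  using assms unfolding goodsp_def by auto

lemma three_good:
  assumes "S = {a, b, c}" "a \<noteq> b" "a \<noteq> c" "b \<noteq> c"
    "special_pt f x a = (1,0)" "special_pt f x b = (0,1)" "special_pt f x c = (1,1)"
  shows "goodsp f x S"
  using assms unfolding goodsp_def p1_distinct_def by auto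

lemma addD_B:
  assumes st: "astable n d {1,3} V r rk f" and j: "j \<in> {1,3}" and c: "mcomp f j = c"
    and b: "b \<notin> V"
  defines "v \<equiv> cval f c (mpt f j)"
  defines "f' \<equiv> f\<lparr>cdeg := (cdeg f)(b := (0,0)), cF := (cF f)(b := \<lambda>i k. fst v i), cG := (cG f)(b := \<lambda>i k. snd v i),
        par := (par f)(b := c), ppt := (ppt f)(b := mpt f j), qpt := (qpt f)(b := (1,0)),
        mcomp := (mcomp f)(j := b, 2 := b), mpt := (mpt f)(j := (0,1), 2 := (1,1))\<rparr>"
  shows "astable n d {1,2,3} (insert b V) r (rk(b := rk c + 1)) f'" "ev f' 1 = ev f 1" "ev f' 3 = ev f 3" "ev f' 2 = v"
proof -
  have fin: "finite V" and rV: "r \<in> V" using st unfolding astable_def by auto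
  have mV: "mcomp f j' \<in> V" "mpt f j' \<noteq> (0,0)" if "j' \<in> {1,3}" for j' using st that unfolding astable_def by auto
  have cV: "c \<in> V" using mV j c by auto
  have parV: "par f y \<in> V" "rk (par f y) < rk y" "qpt f y \<noteq> (0,0)" "ppt f y \<noteq> (0,0)"
     "pt_eq (cval f y (qpt f y)) (cval f (par f y) (ppt f y))" if "y \<in> V" "y \<noteq> r" for y
    using st that unfolding astable_def by auto
  have bc: "b \<noteq> c" "b \<noteq> r" using b cV rV by auto
  have j2: "j \<noteq> 2" using j by auto
  have vX: "v \<in> Xpts n" unfolding v_def using st cV mV[OF j] c by (intro cval_Xpts) (auto simp: astable_def)
  have cvb: "cval f' b z = v" for z
    unfolding cval_def f'_def using const_morph(2,3)[OF vX] by simp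
  have cvo: "cval f' x z = cval f x z" if "x \<noteq> b" for x z
    unfolding cval_def f'_def using that by simp
  have ev1: "ev f' j' = ev f j'" if "j' \<in> {1,3}" "j' \<noteq> j" for j'
  proof -
    have e: "mcomp f' j' = mcomp f j'" "mpt f' j' = mpt f j'" using that by (auto simp: f'_def)
    have nb: "mcomp f j' \<noteq> b" using mV(1)[OF that(1)] b by auto
    have "ev f' j' = cval f' (mcomp f j') (mpt f j')" unfolding ev_def e by (rule refl)
    also have "\<dots> = cval f (mcomp f j') (mpt f j')" by (rule cvo[OF nb])
    finally show ?thesis unfolding ev_def .
  qed
  have evj: "ev f' j = ev f j" unfolding ev_def using cvb c j2 by (simp add: f'_def v_def)
  have ev2: "ev f' 2 = v" unfolding ev_def using cvb by (simp add: f'_def)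
  show "ev f' 2 = v" by (rule ev2)
  show "ev f' 1 = ev f 1"
  proof (cases "j = 1")
    case True then show ?thesis using evj by simp
  next
    case False then show ?thesis using ev1[of 1] by simp
  qed
  show "ev f' 3 = ev f 3"
  proof (cases "j = 3")
    case True then show ?thesis using evj by simp
  next
    case False then show ?thesis using ev1[of 3] by simp
  qed
  let ?V = "insert b V" and ?rk = "rk(b := rk c + 1)"
  have spb: "aspecials {1,2,3} ?V r f' b = {Up, Mark j, Mark 2}"
  proof -
    have "l \<in> aspecials {1,2,3} ?V r f' b \<longleftrightarrow> l \<in> {Up, Mark j, Mark 2}" for l
    proof (cases l)
      case (Down y)
      have "\<not> (y \<in> ?V \<and> y \<noteq> r \<and> par f' y = b)"
        using parV b bc by (auto simp: f'_def)
      then show ?thesis using Down by simp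
    next
      case (Mark i)
      show ?thesis using Mark j mV b by (auto simp: f'_def)
    qed (use bc in simp)
    then show ?thesis by blast
  qed
  have spc: "aspecials {1,2,3} ?V r f' c = insert (Down b) (aspecials {1,3} V r f c - {Mark j})"
  proof -
    have "l \<in> aspecials {1,2,3} ?V r f' c \<longleftrightarrow> l \<in> insert (Down b) (aspecials {1,3} V r f c - {Mark j})" for l
      using bc j c by (cases l) (auto simp: f'_def)
    then show ?thesis by blast
  qed
  have spo: "aspecials {1,2,3} ?V r f' x = aspecials {1,3} V r f x" if "x \<in> V" "x \<noteq> c" for x
  proof -
    have "l \<in> aspecials {1,2,3} ?V r f' x \<longleftrightarrow> l \<in> aspecials {1,3} V r f x" for l
      using that bc j c b by (cases l) (auto simp: f'_def)
    then show ?thesis by blast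
  qed
  have good0: "goodsp f x (aspecials {1,3} V r f x)" if "x \<in> V" for x using st that unfolding astable_def by auto
  have good: "goodsp f' x (aspecials {1,2,3} ?V r f' x)" if x: "x \<in> ?V" for x
  proof -
    consider "x = b" | "x = c" | "x \<in> V" "x \<noteq> c" using x by auto
    then show ?thesis
    proof cases
      case 1
      show ?thesis unfolding 1 spb by (rule three_good) (use j2 in \<open>auto simp: f'_def\<close>)
    next
      case 2
      define h where "h = (\<lambda>l. if l = Down b then Mark j else l)"
      show ?thesis unfolding 2
      proof (rule goodsp_transfer[of h])
        have "Mark j \<in> aspecials {1,3} V r f c" using j c by simp
        moreover have "Down b \<notin> aspecials {1,3} V r f c" using b by simp
        ultimately show "bij_betw h (aspecials {1, 2, 3} ?V r f' c) (aspecials {1, 3} V r f c)"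
          unfolding spc h_def bij_betw_def inj_on_def by (auto simp: image_iff)
        show "special_pt f' c l = special_pt f c (h l)" if "l \<in> aspecials {1, 2, 3} ?V r f' c" for l
          using that bc j2 unfolding spc h_def by (cases l) (auto simp: f'_def)
        show "cdeg f' c = cdeg f c" using bc by (simp add: f'_def)
        show "goodsp f c (aspecials {1, 3} V r f c)" using good0 cV by blast
      qed
    next
      case 3
      show ?thesis
      proof (rule goodsp_id[OF good0[OF 3(1)] spo[OF 3]])
        show "special_pt f' x l = special_pt f x l" if "l \<in> aspecials {1, 3} V r f x" for l
          using that 3 b c by (cases l) (auto simp: f'_def)
        show "cdeg f' x = cdeg f x" using 3 b by (auto simp: f'_def)
      qed
    qed
  qed
  have morph: "\<forall>x\<in>?V. is_morphism n (fst (cdeg f' x)) (snd (cdeg f' x)) (cF f' x) (cG f' x)"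
    using st const_morph(1)[OF vX] b unfolding astable_def by (auto simp: f'_def)
  have sums: "(\<Sum>x\<in>?V. fst (cdeg f' x)) = fst d" "(\<Sum>x\<in>?V. snd (cdeg f' x)) = snd d"
  proof -
    have "(\<Sum>x\<in>?V. fst (cdeg f' x)) = (\<Sum>x\<in>V. fst (cdeg f' x))" using fin b by (simp add: f'_def)
    also have "\<dots> = (\<Sum>x\<in>V. fst (cdeg f x))" using b by (intro sum.cong) (auto simp: f'_def)
    finally show "(\<Sum>x\<in>?V. fst (cdeg f' x)) = fst d" using st unfolding astable_def by simp
    have "(\<Sum>x\<in>?V. snd (cdeg f' x)) = (\<Sum>x\<in>V. snd (cdeg f' x))" using fin b by (simp add: f'_def)
    also have "\<dots> = (\<Sum>x\<in>V. snd (cdeg f x))" using b by (intro sum.cong) (auto simp: f'_def)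
    finally show "(\<Sum>x\<in>?V. snd (cdeg f' x)) = snd d" using st unfolding astable_def by simp
  qed
  have tree: "\<forall>x\<in>?V. x \<noteq> r \<longrightarrow> par f' x \<in> ?V \<and> ?rk (par f' x) < ?rk x \<and> qpt f' x \<noteq> (0,0) \<and> ppt f' x \<noteq> (0,0)
        \<and> pt_eq (cval f' x (qpt f' x)) (cval f' (par f' x) (ppt f' x))"
  proof (intro ballI impI)
    fix x assume x: "x \<in> ?V" "x \<noteq> r"
    show "par f' x \<in> ?V \<and> ?rk (par f' x) < ?rk x \<and> qpt f' x \<noteq> (0,0) \<and> ppt f' x \<noteq> (0,0)
        \<and> pt_eq (cval f' x (qpt f' x)) (cval f' (par f' x) (ppt f' x))"
    proof (cases "x = b")
      case True
      have "cval f' c (mpt f j) = v" using cvo bc unfolding v_def by simp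
      then show ?thesis using True cV bc mV[OF j] cvb pt_eq_refl by (auto simp: f'_def)
    next
      case False
      then have xV: "x \<in> V" using x by auto
      have "par f x \<noteq> b" using parV[OF xV x(2)] b by auto
      then show ?thesis using False parV[OF xV x(2)] cvo b by (auto simp: f'_def)
    qed
  qed
  have mk: "\<forall>j'\<in>{1,2,3}. mcomp f' j' \<in> ?V \<and> mpt f' j' \<noteq> (0,0)"
    using mV by (auto simp: f'_def)
  show "astable n d {1,2,3} ?V r ?rk f'"
    unfolding astable_def using fin rV morph sums tree mk good by auto
qed



lemma addD_C:
  assumes st: "astable n d {1,3} V r rk f" and C: "C \<in> V" "C \<noteq> r" and b: "b \<notin> V"
  defines "P \<equiv> par f C"
  defines "v \<equiv> cval f P (ppt f C)"
  defines "f' \<equiv> f\<lparr>cdeg := (cdeg f)(b := (0,0)), cF := (cF f)(b := \<lambda>i k. fst v i), cG := (cG f)(b := \<lambda>i k. snd v i),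
        par := (par f)(b := P, C := b), ppt := (ppt f)(b := ppt f C, C := (0,1)), qpt := (qpt f)(b := (1,0)),
        mcomp := (mcomp f)(2 := b), mpt := (mpt f)(2 := (1,1))\<rparr>"
  shows "astable n d {1,2,3} (insert b V) r (rk(b := (rk P + rk C)/2)) f'" "ev f' 1 = ev f 1" "ev f' 3 = ev f 3" "ev f' 2 = v"
proof -
  have fin: "finite V" and rV: "r \<in> V" using st unfolding astable_def by auto
  have mV: "mcomp f j' \<in> V" "mpt f j' \<noteq> (0,0)" if "j' \<in> {1,3}" for j' using st that unfolding astable_def by auto
  have parV: "par f y \<in> V" "rk (par f y) < rk y" "qpt f y \<noteq> (0,0)" "ppt f y \<noteq> (0,0)"
     "pt_eq (cval f y (qpt f y)) (cval f (par f y) (ppt f y))" if "y \<in> V" "y \<noteq> r" for y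
    using st that unfolding astable_def by auto
  have PV: "P \<in> V" "rk P < rk C" using parV[OF C] unfolding P_def by auto
  have PC: "P \<noteq> C" "par f C \<noteq> C" using PV by (auto simp: P_def)
  have bC: "b \<noteq> C" "b \<noteq> r" "b \<noteq> P" using b C rV PV by auto
  have vX: "v \<in> Xpts n" unfolding v_def using st PV parV[OF C]
    by (intro cval_Xpts) (auto simp: astable_def P_def)
  have cvb: "cval f' b z = v" for z
    unfolding cval_def f'_def using const_morph(2,3)[OF vX] by simp
  have cvo: "cval f' x z = cval f x z" if "x \<noteq> b" for x z
    unfolding cval_def f'_def using that by simp
  have ev1: "ev f' j' = ev f j'" if "j' \<in> {1,3}" for j'
  proof -
    have e: "mcomp f' j' = mcomp f j'" "mpt f' j' = mpt f j'" using that by (auto simp: f'_def)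
    have nb: "mcomp f j' \<noteq> b" using mV(1)[OF that(1)] b by auto
    have "ev f' j' = cval f' (mcomp f j') (mpt f j')" unfolding ev_def e by (rule refl)
    also have "\<dots> = cval f (mcomp f j') (mpt f j')" by (rule cvo[OF nb])
    finally show ?thesis unfolding ev_def .
  qed
  show "ev f' 1 = ev f 1" using ev1[of 1] by simp
  show "ev f' 3 = ev f 3" using ev1[of 3] by simp
  show ev2: "ev f' 2 = v" unfolding ev_def using cvb by (simp add: f'_def)
  let ?V = "insert b V" and ?rk = "rk(b := (rk P + rk C)/2)"
  have spb: "aspecials {1,2,3} ?V r f' b = {Up, Down C, Mark 2}"
  proof -
    have "l \<in> aspecials {1,2,3} ?V r f' b \<longleftrightarrow> l \<in> {Up, Down C, Mark 2}" for l
    proof (cases l)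
      case (Down y)
      have "(y \<in> ?V \<and> y \<noteq> r \<and> par f' y = b) \<longleftrightarrow> y = C"
        using parV b bC C by (auto simp: f'_def)
      then show ?thesis using Down by simp
    next
      case (Mark i)
      show ?thesis using Mark mV b by (auto simp: f'_def)
    qed (use bC in simp)
    then show ?thesis by blast
  qed
  have spP: "aspecials {1,2,3} ?V r f' P = insert (Down b) (aspecials {1,3} V r f P - {Down C})"
  proof -
    have "l \<in> aspecials {1,2,3} ?V r f' P \<longleftrightarrow> l \<in> insert (Down b) (aspecials {1,3} V r f P - {Down C})" for l
      using bC PC mV b by (cases l) (auto simp: f'_def)
    then show ?thesis by blast
  qed
  have spC: "aspecials {1,2,3} ?V r f' C = aspecials {1,3} V r f C"
  proof -
    have "l \<in> aspecials {1,2,3} ?V r f' C \<longleftrightarrow> l \<in> aspecials {1,3} V r f C" for l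
      using bC PC mV b by (cases l) (auto simp: f'_def)
    then show ?thesis by blast
  qed
  have spo: "aspecials {1,2,3} ?V r f' x = aspecials {1,3} V r f x" if "x \<in> V" "x \<noteq> P" "x \<noteq> C" for x
  proof -
    have "l \<in> aspecials {1,2,3} ?V r f' x \<longleftrightarrow> l \<in> aspecials {1,3} V r f x" for l
      using that bC PC mV b by (cases l) (auto simp: f'_def P_def)
    then show ?thesis by blast
  qed
  have good0: "goodsp f x (aspecials {1,3} V r f x)" if "x \<in> V" for x using st that unfolding astable_def by auto
  have good: "goodsp f' x (aspecials {1,2,3} ?V r f' x)" if x: "x \<in> ?V" for x
  proof -
    consider "x = b" | "x = P" | "x = C" | "x \<in> V" "x \<noteq> P" "x \<noteq> C" using x by auto
    then show ?thesis
    proof cases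
      case 1
      show ?thesis unfolding 1 spb by (rule three_good) (use bC in \<open>auto simp: f'_def\<close>)
    next
      case 2
      define h where "h = (\<lambda>l. if l = Down b then Down C else l)"
      show ?thesis unfolding 2
      proof (rule goodsp_transfer[of h])
        have "Down C \<in> aspecials {1,3} V r f P" using C P_def by simp
        moreover have "Down b \<notin> aspecials {1,3} V r f P" using b by simp
        ultimately show "bij_betw h (aspecials {1, 2, 3} ?V r f' P) (aspecials {1, 3} V r f P)"
          unfolding spP h_def bij_betw_def inj_on_def by (auto simp: image_iff)
        show "special_pt f' P l = special_pt f P (h l)" if "l \<in> aspecials {1, 2, 3} ?V r f' P" for l
          using that bC PC unfolding spP h_def by (cases l) (auto simp: f'_def)
        show "cdeg f' P = cdeg f P" using bC by (simp add: f'_def)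
        show "goodsp f P (aspecials {1, 3} V r f P)" using good0 PV by blast
      qed
    next
      case 3
      show ?thesis unfolding 3
      proof (rule goodsp_id[OF good0[OF C(1)] spC])
        show "special_pt f' C l = special_pt f C l" if "l \<in> aspecials {1, 3} V r f C" for l
          using that bC PC b by (cases l) (auto simp: f'_def)
        show "cdeg f' C = cdeg f C" using bC by (auto simp: f'_def)
      qed
    next
      case 4
      show ?thesis
      proof (rule goodsp_id[OF good0[OF 4(1)] spo[OF 4]])
        show "special_pt f' x l = special_pt f x l" if "l \<in> aspecials {1, 3} V r f x" for l
          using that 4 b bC P_def by (cases l) (auto simp: f'_def)
        show "cdeg f' x = cdeg f x" using 4 b by (auto simp: f'_def)
      qed
    qed
  qed
  have morph: "\<forall>x\<in>?V. is_morphism n (fst (cdeg f' x)) (snd (cdeg f' x)) (cF f' x) (cG f' x)"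
    using st const_morph(1)[OF vX] b unfolding astable_def by (auto simp: f'_def)
  have sums: "(\<Sum>x\<in>?V. fst (cdeg f' x)) = fst d" "(\<Sum>x\<in>?V. snd (cdeg f' x)) = snd d"
  proof -
    have "(\<Sum>x\<in>?V. fst (cdeg f' x)) = (\<Sum>x\<in>V. fst (cdeg f' x))" using fin b by (simp add: f'_def)
    also have "\<dots> = (\<Sum>x\<in>V. fst (cdeg f x))" using b by (intro sum.cong) (auto simp: f'_def)
    finally show "(\<Sum>x\<in>?V. fst (cdeg f' x)) = fst d" using st unfolding astable_def by simp
    have "(\<Sum>x\<in>?V. snd (cdeg f' x)) = (\<Sum>x\<in>V. snd (cdeg f' x))" using fin b by (simp add: f'_def)
    also have "\<dots> = (\<Sum>x\<in>V. snd (cdeg f x))" using b by (intro sum.cong) (auto simp: f'_def)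
    finally show "(\<Sum>x\<in>?V. snd (cdeg f' x)) = snd d" using st unfolding astable_def by simp
  qed
  have tree: "\<forall>x\<in>?V. x \<noteq> r \<longrightarrow> par f' x \<in> ?V \<and> ?rk (par f' x) < ?rk x \<and> qpt f' x \<noteq> (0,0) \<and> ppt f' x \<noteq> (0,0)
        \<and> pt_eq (cval f' x (qpt f' x)) (cval f' (par f' x) (ppt f' x))"
  proof (intro ballI impI)
    fix x assume x: "x \<in> ?V" "x \<noteq> r"
    consider "x = b" | "x = C" | "x \<in> V" "x \<noteq> C" using x by auto
    then show "par f' x \<in> ?V \<and> ?rk (par f' x) < ?rk x \<and> qpt f' x \<noteq> (0,0) \<and> ppt f' x \<noteq> (0,0)
        \<and> pt_eq (cval f' x (qpt f' x)) (cval f' (par f' x) (ppt f' x))"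
    proof cases
      case 1
      have e: "par f' b = P" "ppt f' b = ppt f C" "qpt f' b = (1,0)" using bC by (auto simp: f'_def)
      have "cval f' P (ppt f C) = v" using cvo bC unfolding v_def by simp
      then show ?thesis unfolding 1 e using PV parV[OF C] cvb pt_eq_refl bC by (auto simp: P_def)
    next
      case 2
      have e: "par f' C = b" "ppt f' C = (0,1)" "qpt f' C = qpt f C" using bC by (auto simp: f'_def)
      have "pt_eq (cval f' C (qpt f C)) (cval f' b (0,1))"
        using cvo[of C] cvb parV(5)[OF C] bC unfolding v_def P_def by simp
      then show ?thesis unfolding 2 e using PV parV[OF C] bC by auto
    next
      case 3
      have "par f x \<noteq> b" using parV[OF 3(1) x(2)] b by auto
      have xb: "x \<noteq> b" using 3 b by auto
      then show ?thesis using 3 parV[OF 3(1) x(2)] cvo bC \<open>par f x \<noteq> b\<close> by (auto simp: f'_def)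
    qed
  qed
  have mk: "\<forall>j'\<in>{1,2,3}. mcomp f' j' \<in> ?V \<and> mpt f' j' \<noteq> (0,0)"
    using mV by (auto simp: f'_def)
  show "astable n d {1,2,3} ?V r ?rk f'"
    unfolding astable_def using fin rV morph sums tree mk good by auto
qed



lemma cval_deg0: "cdeg f c = (0,0) \<Longrightarrow> cval f c z = cval f c z'"
  unfolding cval_def curve_eval_def form_eval_def by simp

lemma sum_remove0:
  assumes "finite V" "c \<in> V" "cdeg f c = (0,0)"
  shows "(\<Sum>x\<in>V - {c}. fst (cdeg f x)) = (\<Sum>x\<in>V. fst (cdeg f x))"
        "(\<Sum>x\<in>V - {c}. snd (cdeg f x)) = (\<Sum>x\<in>V. snd (cdeg f x))"
  using sum.remove[OF assms(1,2), of "\<lambda>x. fst (cdeg f x)"] sum.remove[OF assms(1,2), of "\<lambda>x. snd (cdeg f x)"] assms(3)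
  by auto

lemma contractP_Down:
  assumes st: "astable n d {1,2,3} V r rk f" and c3: "c3 \<in> V" "c3 \<noteq> r" "cdeg f c3 = (0,0)"
    and S: "aspecials {1,2,3} V r f c3 = {Mark 3, Up, Down y}"
  defines "P \<equiv> par f c3"
  defines "f' \<equiv> f\<lparr>par := (par f)(y := P), ppt := (ppt f)(y := ppt f c3)\<rparr>"
  shows "astable n d {1,2} (V - {c3}) r rk f'" "ev f' 1 = ev f 1" "ev f' 2 = ev f 2"
proof -
  have fin: "finite V" and rV: "r \<in> V" using st unfolding astable_def by auto
  have mV: "mcomp f j' \<in> V" "mpt f j' \<noteq> (0,0)" if "j' \<in> {1,2,3}" for j' using st that unfolding astable_def by auto
  have parV: "par f x \<in> V" "rk (par f x) < rk x" "qpt f x \<noteq> (0,0)" "ppt f x \<noteq> (0,0)"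
     "pt_eq (cval f x (qpt f x)) (cval f (par f x) (ppt f x))" if "x \<in> V" "x \<noteq> r" for x
    using st that unfolding astable_def by auto
  have m3: "mcomp f 3 = c3" using S by (metis asp_mem(3) insertI1)
  have yS: "y \<in> V" "y \<noteq> r" "par f y = c3" using S by (metis asp_mem(2) insertCI)+
  have ch: "x = y" if "x \<in> V" "x \<noteq> r" "par f x = c3" for x
  proof -
    have "Down x \<in> aspecials {1,2,3} V r f c3" using that by simp
    then have "Down x \<in> {Mark 3, Up, Down y}" unfolding S .
    then show ?thesis by simp
  qed
  have mk12: "mcomp f j \<noteq> c3" if "j \<in> {1,2}" for j
  proof
    assume "mcomp f j = c3"
    then have "Mark j \<in> aspecials {1,2,3} V r f c3" using that by auto
    then have "Mark j \<in> {Mark 3, Up, Down y}" unfolding S .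
    then show False using that by auto
  qed
  have PV: "P \<in> V" "rk P < rk c3" using parV[OF c3(1,2)] unfolding P_def by auto
  have Pc: "P \<noteq> c3" using PV by auto
  have yc: "y \<noteq> c3" using yS parV(2)[OF yS(1,2)] by auto
  have cv: "cval f' x z = cval f x z" for x z unfolding cval_def f'_def by simp
  show "ev f' 1 = ev f 1" "ev f' 2 = ev f 2" unfolding ev_def cv by (simp_all add: f'_def)
  let ?V = "V - {c3}"
  have spP: "aspecials {1,2} ?V r f' P = insert (Down y) (aspecials {1,2,3} V r f P - {Down c3})"
  proof -
    have "l \<in> aspecials {1,2} ?V r f' P \<longleftrightarrow> l \<in> insert (Down y) (aspecials {1,2,3} V r f P - {Down c3})" for l
      using yS yc Pc m3 by (cases l) (auto simp: f'_def P_def)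
    then show ?thesis by blast
  qed
  have spo: "aspecials {1,2} ?V r f' x = aspecials {1,2,3} V r f x" if "x \<in> ?V" "x \<noteq> P" for x
  proof -
    have "l \<in> aspecials {1,2} ?V r f' x \<longleftrightarrow> l \<in> aspecials {1,2,3} V r f x" for l
      using that yS yc Pc m3 by (cases l) (auto simp: f'_def P_def)
    then show ?thesis by blast
  qed
  have good0: "goodsp f x (aspecials {1,2,3} V r f x)" if "x \<in> V" for x using st that unfolding astable_def by auto
  have good: "goodsp f' x (aspecials {1,2} ?V r f' x)" if x: "x \<in> ?V" for x
  proof (cases "x = P")
    case True
    define h where "h = (\<lambda>l. if l = Down y then Down c3 else l)"
    show ?thesis unfolding True
    proof (rule goodsp_transfer[of h])
      have "Down c3 \<in> aspecials {1,2,3} V r f P" using c3 P_def by simp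
      moreover have "Down y \<notin> aspecials {1,2,3} V r f P" using yS Pc by simp
      ultimately show "bij_betw h (aspecials {1,2} ?V r f' P) (aspecials {1,2,3} V r f P)"
        unfolding spP h_def bij_betw_def inj_on_def by (auto simp: image_iff)
      show "special_pt f' P l = special_pt f P (h l)" if "l \<in> aspecials {1,2} ?V r f' P" for l
        using that unfolding spP h_def by (cases l) (auto simp: f'_def)
      show "cdeg f' P = cdeg f P" by (simp add: f'_def)
      show "goodsp f P (aspecials {1,2,3} V r f P)" using good0 PV by blast
    qed
  next
    case False
    show ?thesis
    proof (rule goodsp_id[OF good0 spo[OF x False]])
      show "x \<in> V" using x by auto
      show "special_pt f' x l = special_pt f x l" if "l \<in> aspecials {1,2,3} V r f x" for l
        using that x False yS by (cases l) (auto simp: f'_def P_def)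
      show "cdeg f' x = cdeg f x" by (auto simp: f'_def)
    qed
  qed
  have morph: "\<forall>x\<in>?V. is_morphism n (fst (cdeg f' x)) (snd (cdeg f' x)) (cF f' x) (cG f' x)"
    using st unfolding astable_def by (auto simp: f'_def)
  have sums: "(\<Sum>x\<in>?V. fst (cdeg f' x)) = fst d" "(\<Sum>x\<in>?V. snd (cdeg f' x)) = snd d"
    using sum_remove0[OF fin c3(1), of f] c3(3) st unfolding astable_def by (auto simp: f'_def)
  have tree: "\<forall>x\<in>?V. x \<noteq> r \<longrightarrow> par f' x \<in> ?V \<and> rk (par f' x) < rk x \<and> qpt f' x \<noteq> (0,0) \<and> ppt f' x \<noteq> (0,0)
        \<and> pt_eq (cval f' x (qpt f' x)) (cval f' (par f' x) (ppt f' x))"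
  proof (intro ballI impI)
    fix x assume x: "x \<in> ?V" "x \<noteq> r"
    show "par f' x \<in> ?V \<and> rk (par f' x) < rk x \<and> qpt f' x \<noteq> (0,0) \<and> ppt f' x \<noteq> (0,0)
        \<and> pt_eq (cval f' x (qpt f' x)) (cval f' (par f' x) (ppt f' x))"
    proof (cases "x = y")
      case True
      have e: "par f' y = P" "ppt f' y = ppt f c3" "qpt f' y = qpt f y" by (auto simp: f'_def)
      have "pt_eq (cval f y (qpt f y)) (cval f c3 (ppt f y))" using parV(5)[OF yS(1,2)] yS(3) by simp
      also have "cval f c3 (ppt f y) = cval f c3 (qpt f c3)" by (rule cval_deg0[OF c3(3)])
      finally have "pt_eq (cval f y (qpt f y)) (cval f P (ppt f c3))"
        using pt_eq_trans parV(5)[OF c3(1,2)] unfolding P_def by blast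
      then show ?thesis unfolding True e cv using PV Pc parV[OF c3(1,2)] parV[OF yS(1,2)] yS by auto
    next
      case False
      have xV: "x \<in> V" "x \<noteq> c3" using x by auto
      have "par f x \<noteq> c3" using ch[OF xV(1) x(2)] False by auto
      then show ?thesis using False parV[OF xV(1) x(2)] cv by (auto simp: f'_def)
    qed
  qed
  have mk: "\<forall>j'\<in>{1,2}. mcomp f' j' \<in> ?V \<and> mpt f' j' \<noteq> (0,0)"
    using mV mk12 by (auto simp: f'_def)
  show "astable n d {1,2} ?V r rk f'"
    unfolding astable_def using fin rV morph sums tree mk good c3 by auto
qed


lemma contractP_Mark:
  assumes st: "astable n d {1,2,3} V r rk f" and c3: "c3 \<in> V" "c3 \<noteq> r" "cdeg f c3 = (0,0)"
    and S: "aspecials {1,2,3} V r f c3 = {Mark 3, Up, Mark j}" and j: "j \<in> {1,2}"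
  defines "P \<equiv> par f c3"
  defines "f' \<equiv> f\<lparr>mcomp := (mcomp f)(j := P), mpt := (mpt f)(j := ppt f c3)\<rparr>"
  shows "astable n d {1,2} (V - {c3}) r rk f'" "pt_eq (ev f 1) (ev f' 1)" "pt_eq (ev f 2) (ev f' 2)"
proof -
  have fin: "finite V" and rV: "r \<in> V" using st unfolding astable_def by auto
  have mV: "mcomp f j' \<in> V" "mpt f j' \<noteq> (0,0)" if "j' \<in> {1,2,3}" for j' using st that unfolding astable_def by auto
  have parV: "par f x \<in> V" "rk (par f x) < rk x" "qpt f x \<noteq> (0,0)" "ppt f x \<noteq> (0,0)"
     "pt_eq (cval f x (qpt f x)) (cval f (par f x) (ppt f x))" if "x \<in> V" "x \<noteq> r" for x
    using st that unfolding astable_def by auto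
  have m3: "mcomp f 3 = c3" using S by (metis asp_mem(3) insertI1)
  have mj: "mcomp f j = c3"
  proof -
    have "Mark j \<in> aspecials {1,2,3} V r f c3" unfolding S by simp
    then show ?thesis by simp
  qed
  have ch: "par f x \<noteq> c3" if "x \<in> V" "x \<noteq> r" for x
  proof
    assume "par f x = c3"
    then have "Down x \<in> aspecials {1,2,3} V r f c3" using that by simp
    then have "Down x \<in> {Mark 3, Up, Mark j}" unfolding S .
    then show False by simp
  qed
  have mk12: "mcomp f j' \<noteq> c3" if "j' \<in> {1,2}" "j' \<noteq> j" for j'
  proof
    assume "mcomp f j' = c3"
    then have "Mark j' \<in> aspecials {1,2,3} V r f c3" using that by auto
    then have "Mark j' \<in> {Mark 3, Up, Mark j}" unfolding S .
    then show False using that by auto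
  qed
  have PV: "P \<in> V" "rk P < rk c3" using parV[OF c3(1,2)] unfolding P_def by auto
  have Pc: "P \<noteq> c3" using PV by auto
  have cv: "cval f' x z = cval f x z" for x z unfolding cval_def f'_def by simp
  have evo: "ev f' j' = ev f j'" if "j' \<noteq> j" for j' unfolding ev_def cv using that by (simp add: f'_def)
  have evj: "pt_eq (ev f j) (ev f' j)"
  proof -
    have "ev f j = cval f c3 (qpt f c3)" unfolding ev_def mj by (rule cval_deg0[OF c3(3)])
    moreover have "ev f' j = cval f P (ppt f c3)" unfolding ev_def cv by (simp add: f'_def)
    ultimately show ?thesis using parV(5)[OF c3(1,2)] unfolding P_def by simp
  qed
  show "pt_eq (ev f 1) (ev f' 1)" using evj evo[of 1] pt_eq_refl by (cases "j = 1") auto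
  show "pt_eq (ev f 2) (ev f' 2)" using evj evo[of 2] pt_eq_refl by (cases "j = 2") auto
  let ?V = "V - {c3}"
  have spP: "aspecials {1,2} ?V r f' P = insert (Mark j) (aspecials {1,2,3} V r f P - {Down c3})"
  proof -
    have "l \<in> aspecials {1,2} ?V r f' P \<longleftrightarrow> l \<in> insert (Mark j) (aspecials {1,2,3} V r f P - {Down c3})" for l
      using j Pc m3 by (cases l) (auto simp: f'_def P_def)
    then show ?thesis by blast
  qed
  have spo: "aspecials {1,2} ?V r f' x = aspecials {1,2,3} V r f x" if "x \<in> ?V" "x \<noteq> P" for x
  proof -
    have "l \<in> aspecials {1,2} ?V r f' x \<longleftrightarrow> l \<in> aspecials {1,2,3} V r f x" for l
      using that j mj Pc m3 by (cases l) (auto simp: f'_def P_def)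
    then show ?thesis by blast
  qed
  have good0: "goodsp f x (aspecials {1,2,3} V r f x)" if "x \<in> V" for x using st that unfolding astable_def by auto
  have good: "goodsp f' x (aspecials {1,2} ?V r f' x)" if x: "x \<in> ?V" for x
  proof (cases "x = P")
    case True
    define h where "h = (\<lambda>l. if l = Mark j then Down c3 else l)"
    show ?thesis unfolding True
    proof (rule goodsp_transfer[of h])
      have "Down c3 \<in> aspecials {1,2,3} V r f P" using c3 P_def by simp
      moreover have "Mark j \<notin> aspecials {1,2,3} V r f P" using mj Pc by simp
      ultimately show "bij_betw h (aspecials {1,2} ?V r f' P) (aspecials {1,2,3} V r f P)"
        unfolding spP h_def bij_betw_def inj_on_def by (auto simp: image_iff)
      show "special_pt f' P l = special_pt f P (h l)" if "l \<in> aspecials {1,2} ?V r f' P" for l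
        using that unfolding spP h_def by (cases l) (auto simp: f'_def)
      show "cdeg f' P = cdeg f P" by (simp add: f'_def)
      show "goodsp f P (aspecials {1,2,3} V r f P)" using good0 PV by blast
    qed
  next
    case False
    show ?thesis
    proof (rule goodsp_id[OF good0 spo[OF x False]])
      show "x \<in> V" using x by auto
      show "special_pt f' x l = special_pt f x l" if "l \<in> aspecials {1,2,3} V r f x" for l
        using that x False mj by (cases l) (auto simp: f'_def P_def)
      show "cdeg f' x = cdeg f x" by (auto simp: f'_def)
    qed
  qed
  have morph: "\<forall>x\<in>?V. is_morphism n (fst (cdeg f' x)) (snd (cdeg f' x)) (cF f' x) (cG f' x)"
    using st unfolding astable_def by (auto simp: f'_def)
  have sums: "(\<Sum>x\<in>?V. fst (cdeg f' x)) = fst d" "(\<Sum>x\<in>?V. snd (cdeg f' x)) = snd d"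
    using sum_remove0[OF fin c3(1), of f] c3(3) st unfolding astable_def by (auto simp: f'_def)
  have tree: "\<forall>x\<in>?V. x \<noteq> r \<longrightarrow> par f' x \<in> ?V \<and> rk (par f' x) < rk x \<and> qpt f' x \<noteq> (0,0) \<and> ppt f' x \<noteq> (0,0)
        \<and> pt_eq (cval f' x (qpt f' x)) (cval f' (par f' x) (ppt f' x))"
  proof (intro ballI impI)
    fix x assume x: "x \<in> ?V" "x \<noteq> r"
    have xV: "x \<in> V" "x \<noteq> c3" using x by auto
    show "par f' x \<in> ?V \<and> rk (par f' x) < rk x \<and> qpt f' x \<noteq> (0,0) \<and> ppt f' x \<noteq> (0,0)
        \<and> pt_eq (cval f' x (qpt f' x)) (cval f' (par f' x) (ppt f' x))"
      using ch[OF xV(1) x(2)] parV[OF xV(1) x(2)] cv by (auto simp: f'_def)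
  qed
  have mk: "\<forall>j'\<in>{1,2}. mcomp f' j' \<in> ?V \<and> mpt f' j' \<noteq> (0,0)"
    using mV mk12 PV Pc parV(4)[OF c3(1,2)] by (auto simp: f'_def)
  show "astable n d {1,2} ?V r rk f'"
    unfolding astable_def using fin rV morph sums tree mk good c3 by auto
qed

lemma contractR_Down:
  assumes st: "astable n d {1,2,3} V r rk f" and r0: "cdeg f r = (0,0)"
    and S: "aspecials {1,2,3} V r f r = {Mark 3, Down y, Down y2}" and yy: "y \<noteq> y2"
  defines "f' \<equiv> f\<lparr>par := (par f)(y2 := y), ppt := (ppt f)(y2 := qpt f y)\<rparr>"
  shows "astable n d {1,2} (V - {r}) y (rk(y := rk r)) f'" "ev f' 1 = ev f 1" "ev f' 2 = ev f 2"
proof -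
  have fin: "finite V" and rV: "r \<in> V" using st unfolding astable_def by auto
  have mV: "mcomp f j' \<in> V" "mpt f j' \<noteq> (0,0)" if "j' \<in> {1,2,3}" for j' using st that unfolding astable_def by auto
  have parV: "par f x \<in> V" "rk (par f x) < rk x" "qpt f x \<noteq> (0,0)" "ppt f x \<noteq> (0,0)"
     "pt_eq (cval f x (qpt f x)) (cval f (par f x) (ppt f x))" if "x \<in> V" "x \<noteq> r" for x
    using st that unfolding astable_def by auto
  have m3: "mcomp f 3 = r" using S by (metis asp_mem(3) insertI1)
  have yS: "y \<in> V" "y \<noteq> r" "par f y = r"
  proof -
    have "Down y \<in> aspecials {1,2,3} V r f r" unfolding S by simp
    then show "y \<in> V" "y \<noteq> r" "par f y = r" by simp_all
  qed
  have y2S: "y2 \<in> V" "y2 \<noteq> r" "par f y2 = r"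
  proof -
    have "Down y2 \<in> aspecials {1,2,3} V r f r" unfolding S by simp
    then show "y2 \<in> V" "y2 \<noteq> r" "par f y2 = r" by simp_all
  qed
  have ch: "x = y \<or> x = y2" if "x \<in> V" "x \<noteq> r" "par f x = r" for x
  proof -
    have "Down x \<in> aspecials {1,2,3} V r f r" using that by simp
    then have "Down x \<in> {Mark 3, Down y, Down y2}" unfolding S .
    then show ?thesis by simp
  qed
  have mk12: "mcomp f j' \<noteq> r" if "j' \<in> {1,2}" for j'
  proof
    assume "mcomp f j' = r"
    then have "Mark j' \<in> aspecials {1,2,3} V r f r" using that by auto
    then have "Mark j' \<in> {Mark 3, Down y, Down y2}" unfolding S .
    then show False using that by auto
  qed
  have rr: "rk r < rk x" if "x \<in> V" "x \<noteq> r" for x using rank_root[OF st that] .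
  have cv: "cval f' x z = cval f x z" for x z unfolding cval_def f'_def by simp
  show "ev f' 1 = ev f 1" "ev f' 2 = ev f 2" unfolding ev_def cv by (simp_all add: f'_def)
  let ?V = "V - {r}" and ?rk = "rk(y := rk r)"
  have spy: "aspecials {1,2} ?V y f' y = insert (Down y2) (aspecials {1,2,3} V r f y - {Up})"
  proof -
    have "l \<in> aspecials {1,2} ?V y f' y \<longleftrightarrow> l \<in> insert (Down y2) (aspecials {1,2,3} V r f y - {Up})" for l
      using yS y2S yy m3 by (cases l) (auto simp: f'_def)
    then show ?thesis by blast
  qed
  have spo: "aspecials {1,2} ?V y f' x = aspecials {1,2,3} V r f x" if "x \<in> ?V" "x \<noteq> y" for x
  proof -
    have "l \<in> aspecials {1,2} ?V y f' x \<longleftrightarrow> l \<in> aspecials {1,2,3} V r f x" for l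
      using that yS y2S yy m3 by (cases l) (auto simp: f'_def)
    then show ?thesis by blast
  qed
  have good0: "goodsp f x (aspecials {1,2,3} V r f x)" if "x \<in> V" for x using st that unfolding astable_def by auto
  have good: "goodsp f' x (aspecials {1,2} ?V y f' x)" if x: "x \<in> ?V" for x
  proof (cases "x = y")
    case True
    define h where "h = (\<lambda>l. if l = Down y2 then Up else l)"
    show ?thesis unfolding True
    proof (rule goodsp_transfer[of h])
      have "Up \<in> aspecials {1,2,3} V r f y" using yS by simp
      moreover have "Down y2 \<notin> aspecials {1,2,3} V r f y" using y2S yS by simp
      ultimately show "bij_betw h (aspecials {1,2} ?V y f' y) (aspecials {1,2,3} V r f y)"
        unfolding spy h_def bij_betw_def inj_on_def by (auto simp: image_iff)
      show "special_pt f' y l = special_pt f y (h l)" if "l \<in> aspecials {1,2} ?V y f' y" for l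
        using that unfolding spy h_def by (cases l) (auto simp: f'_def)
      show "cdeg f' y = cdeg f y" by (simp add: f'_def)
      show "goodsp f y (aspecials {1,2,3} V r f y)" using good0 yS by blast
    qed
  next
    case False
    show ?thesis
    proof (rule goodsp_id[OF good0 spo[OF x False]])
      show "x \<in> V" using x by auto
      show "special_pt f' x l = special_pt f x l" if "l \<in> aspecials {1,2,3} V r f x" for l
        using that x False y2S by (cases l) (auto simp: f'_def)
      show "cdeg f' x = cdeg f x" by (auto simp: f'_def)
    qed
  qed
  have morph: "\<forall>x\<in>?V. is_morphism n (fst (cdeg f' x)) (snd (cdeg f' x)) (cF f' x) (cG f' x)"
    using st unfolding astable_def by (auto simp: f'_def)
  have sums: "(\<Sum>x\<in>?V. fst (cdeg f' x)) = fst d" "(\<Sum>x\<in>?V. snd (cdeg f' x)) = snd d"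
    using sum_remove0[OF fin rV, of f] r0 st unfolding astable_def by (auto simp: f'_def)
  have tree: "\<forall>x\<in>?V. x \<noteq> y \<longrightarrow> par f' x \<in> ?V \<and> ?rk (par f' x) < ?rk x \<and> qpt f' x \<noteq> (0,0) \<and> ppt f' x \<noteq> (0,0)
        \<and> pt_eq (cval f' x (qpt f' x)) (cval f' (par f' x) (ppt f' x))"
  proof (intro ballI impI)
    fix x assume x: "x \<in> ?V" "x \<noteq> y"
    have xV: "x \<in> V" "x \<noteq> r" using x by auto
    show "par f' x \<in> ?V \<and> ?rk (par f' x) < ?rk x \<and> qpt f' x \<noteq> (0,0) \<and> ppt f' x \<noteq> (0,0)
        \<and> pt_eq (cval f' x (qpt f' x)) (cval f' (par f' x) (ppt f' x))"
    proof (cases "x = y2")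
      case True
      have e: "par f' y2 = y" "ppt f' y2 = qpt f y" "qpt f' y2 = qpt f y2" by (auto simp: f'_def)
      have "pt_eq (cval f y2 (qpt f y2)) (cval f r (ppt f y2))" using parV(5)[OF y2S(1,2)] y2S(3) by simp
      also have "cval f r (ppt f y2) = cval f r (ppt f y)" by (rule cval_deg0[OF r0])
      finally have "pt_eq (cval f y2 (qpt f y2)) (cval f y (qpt f y))"
        using pt_eq_trans pt_eq_sym parV(5)[OF yS(1,2)] yS(3) by metis
      then show ?thesis unfolding True e cv using yS y2S yy rr[OF y2S(1,2)] parV[OF yS(1,2)] parV[OF y2S(1,2)]
        by auto
    next
      case False
      have pr: "par f x \<noteq> r" using ch[OF xV] False x(2) by auto
      have "?rk (par f x) < ?rk x"
      proof (cases "par f x = y")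
        case True then show ?thesis using rr[OF xV] x(2) by simp
      next
        case False then show ?thesis using parV(2)[OF xV] x(2) by simp
      qed
      then show ?thesis using False pr parV[OF xV] cv by (auto simp: f'_def)
    qed
  qed
  have mk: "\<forall>j'\<in>{1,2}. mcomp f' j' \<in> ?V \<and> mpt f' j' \<noteq> (0,0)"
    using mV mk12 by (auto simp: f'_def)
  show "astable n d {1,2} ?V y ?rk f'"
    unfolding astable_def using fin yS morph sums tree mk good by auto
qed

lemma contractR_Mark:
  assumes st: "astable n d {1,2,3} V r rk f" and r0: "cdeg f r = (0,0)"
    and S: "aspecials {1,2,3} V r f r = {Mark 3, Down y, Mark j}" and j: "j \<in> {1,2}"
  defines "f' \<equiv> f\<lparr>mcomp := (mcomp f)(j := y), mpt := (mpt f)(j := qpt f y)\<rparr>"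
  shows "astable n d {1,2} (V - {r}) y (rk(y := rk r)) f'" "pt_eq (ev f 1) (ev f' 1)" "pt_eq (ev f 2) (ev f' 2)"
proof -
  have fin: "finite V" and rV: "r \<in> V" using st unfolding astable_def by auto
  have mV: "mcomp f j' \<in> V" "mpt f j' \<noteq> (0,0)" if "j' \<in> {1,2,3}" for j' using st that unfolding astable_def by auto
  have parV: "par f x \<in> V" "rk (par f x) < rk x" "qpt f x \<noteq> (0,0)" "ppt f x \<noteq> (0,0)"
     "pt_eq (cval f x (qpt f x)) (cval f (par f x) (ppt f x))" if "x \<in> V" "x \<noteq> r" for x
    using st that unfolding astable_def by auto
  have m3: "mcomp f 3 = r" using S by (metis asp_mem(3) insertI1)
  have yS: "y \<in> V" "y \<noteq> r" "par f y = r"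
  proof -
    have "Down y \<in> aspecials {1,2,3} V r f r" unfolding S by simp
    then show "y \<in> V" "y \<noteq> r" "par f y = r" by simp_all
  qed
  have mj: "mcomp f j = r"
  proof -
    have "Mark j \<in> aspecials {1,2,3} V r f r" unfolding S by simp
    then show ?thesis by simp
  qed
  have ch: "x = y" if "x \<in> V" "x \<noteq> r" "par f x = r" for x
  proof -
    have "Down x \<in> aspecials {1,2,3} V r f r" using that by simp
    then have "Down x \<in> {Mark 3, Down y, Mark j}" unfolding S .
    then show ?thesis by simp
  qed
  have mk12: "mcomp f j' \<noteq> r" if "j' \<in> {1,2}" "j' \<noteq> j" for j'
  proof
    assume "mcomp f j' = r"
    then have "Mark j' \<in> aspecials {1,2,3} V r f r" using that by auto
    then have "Mark j' \<in> {Mark 3, Down y, Mark j}" unfolding S .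
    then show False using that by auto
  qed
  have rr: "rk r < rk x" if "x \<in> V" "x \<noteq> r" for x using rank_root[OF st that] .
  have cv: "cval f' x z = cval f x z" for x z unfolding cval_def f'_def by simp
  have evo: "ev f' j' = ev f j'" if "j' \<noteq> j" for j' unfolding ev_def cv using that by (simp add: f'_def)
  have evj: "pt_eq (ev f j) (ev f' j)"
  proof -
    have "ev f j = cval f r (ppt f y)" unfolding ev_def mj by (rule cval_deg0[OF r0])
    moreover have "ev f' j = cval f y (qpt f y)" unfolding ev_def cv by (simp add: f'_def)
    ultimately show ?thesis using parV(5)[OF yS(1,2)] yS(3) pt_eq_sym by simp
  qed
  show "pt_eq (ev f 1) (ev f' 1)" using evj evo[of 1] pt_eq_refl by (cases "j = 1") auto
  show "pt_eq (ev f 2) (ev f' 2)" using evj evo[of 2] pt_eq_refl by (cases "j = 2") auto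
  let ?V = "V - {r}" and ?rk = "rk(y := rk r)"
  have spy: "aspecials {1,2} ?V y f' y = insert (Mark j) (aspecials {1,2,3} V r f y - {Up})"
  proof -
    have "l \<in> aspecials {1,2} ?V y f' y \<longleftrightarrow> l \<in> insert (Mark j) (aspecials {1,2,3} V r f y - {Up})" for l
      using yS j m3 by (cases l) (auto simp: f'_def)
    then show ?thesis by blast
  qed
  have spo: "aspecials {1,2} ?V y f' x = aspecials {1,2,3} V r f x" if "x \<in> ?V" "x \<noteq> y" for x
  proof -
    have "l \<in> aspecials {1,2} ?V y f' x \<longleftrightarrow> l \<in> aspecials {1,2,3} V r f x" for l
      using that yS j mj m3 by (cases l) (auto simp: f'_def)
    then show ?thesis by blast
  qed
  have good0: "goodsp f x (aspecials {1,2,3} V r f x)" if "x \<in> V" for x using st that unfolding astable_def by auto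
  have good: "goodsp f' x (aspecials {1,2} ?V y f' x)" if x: "x \<in> ?V" for x
  proof (cases "x = y")
    case True
    define h where "h = (\<lambda>l. if l = Mark j then Up else l)"
    show ?thesis unfolding True
    proof (rule goodsp_transfer[of h])
      have "Up \<in> aspecials {1,2,3} V r f y" using yS by simp
      moreover have "Mark j \<notin> aspecials {1,2,3} V r f y" using mj yS by simp
      ultimately show "bij_betw h (aspecials {1,2} ?V y f' y) (aspecials {1,2,3} V r f y)"
        unfolding spy h_def bij_betw_def inj_on_def by (auto simp: image_iff)
      show "special_pt f' y l = special_pt f y (h l)" if "l \<in> aspecials {1,2} ?V y f' y" for l
        using that unfolding spy h_def by (cases l) (auto simp: f'_def)
      show "cdeg f' y = cdeg f y" by (simp add: f'_def)
      show "goodsp f y (aspecials {1,2,3} V r f y)" using good0 yS by blast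
    qed
  next
    case False
    show ?thesis
    proof (rule goodsp_id[OF good0 spo[OF x False]])
      show "x \<in> V" using x by auto
      show "special_pt f' x l = special_pt f x l" if "l \<in> aspecials {1,2,3} V r f x" for l
        using that x False mj by (cases l) (auto simp: f'_def)
      show "cdeg f' x = cdeg f x" by (auto simp: f'_def)
    qed
  qed
  have morph: "\<forall>x\<in>?V. is_morphism n (fst (cdeg f' x)) (snd (cdeg f' x)) (cF f' x) (cG f' x)"
    using st unfolding astable_def by (auto simp: f'_def)
  have sums: "(\<Sum>x\<in>?V. fst (cdeg f' x)) = fst d" "(\<Sum>x\<in>?V. snd (cdeg f' x)) = snd d"
    using sum_remove0[OF fin rV, of f] r0 st unfolding astable_def by (auto simp: f'_def)
  have tree: "\<forall>x\<in>?V. x \<noteq> y \<longrightarrow> par f' x \<in> ?V \<and> ?rk (par f' x) < ?rk x \<and> qpt f' x \<noteq> (0,0) \<and> ppt f' x \<noteq> (0,0)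
        \<and> pt_eq (cval f' x (qpt f' x)) (cval f' (par f' x) (ppt f' x))"
  proof (intro ballI impI)
    fix x assume x: "x \<in> ?V" "x \<noteq> y"
    have xV: "x \<in> V" "x \<noteq> r" using x by auto
    have pr: "par f x \<noteq> r" using ch[OF xV] x(2) by auto
    have "?rk (par f x) < ?rk x"
    proof (cases "par f x = y")
      case True then show ?thesis using rr[OF xV] x(2) by simp
    next
      case False then show ?thesis using parV(2)[OF xV] x(2) by simp
    qed
    then show "par f' x \<in> ?V \<and> ?rk (par f' x) < ?rk x \<and> qpt f' x \<noteq> (0,0) \<and> ppt f' x \<noteq> (0,0)
        \<and> pt_eq (cval f' x (qpt f' x)) (cval f' (par f' x) (ppt f' x))"
      using pr parV[OF xV] cv by (auto simp: f'_def)
  qed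
  have mk: "\<forall>j'\<in>{1,2}. mcomp f' j' \<in> ?V \<and> mpt f' j' \<noteq> (0,0)"
    using mV mk12 yS parV(3)[OF yS(1,2)] by (auto simp: f'_def)
  show "astable n d {1,2} ?V y ?rk f'"
    unfolding astable_def using fin yS morph sums tree mk good by auto
qed



lemma forget_simple:
  assumes st: "astable n d {1,2,3} V r rk f"
    and ns: "\<not> (cdeg f (mcomp f 3) = (0,0) \<and> card (aspecials {1,2,3} V r f (mcomp f 3)) = 3)"
  shows "astable n d {1,2} V r rk f"
proof -
  have fin: "finite V" using st unfolding astable_def by auto
  have sp: "aspecials {1,2} V r f x = aspecials {1,2,3} V r f x - {Mark 3}" for x
  proof -
    have "l \<in> aspecials {1,2} V r f x \<longleftrightarrow> l \<in> aspecials {1,2,3} V r f x - {Mark 3}" for l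
      by (cases l) auto
    then show ?thesis by blast
  qed
  have good: "goodsp f x (aspecials {1,2} V r f x)" if x: "x \<in> V" for x
  proof -
    have g0: "goodsp f x (aspecials {1,2,3} V r f x)" using st x unfolding astable_def by auto
    have finS: "finite (aspecials {1,2,3} V r f x)" using finite_aspecials[OF fin] by simp
    have "card (aspecials {1,2,3} V r f x - {Mark 3}) \<ge> 3" if "cdeg f x = (0,0)"
    proof (cases "Mark 3 \<in> aspecials {1,2,3} V r f x")
      case True
      then have "x = mcomp f 3" by simp
      then have "card (aspecials {1,2,3} V r f x) \<noteq> 3" using ns that by auto
      moreover have "card (aspecials {1,2,3} V r f x) \<ge> 3" using g0 that unfolding goodsp_def by auto
      ultimately show ?thesis using True finS by (simp add: card_Diff_singleton)
    next
      case False
      then show ?thesis using g0 that unfolding goodsp_def by simp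
    qed
    then show ?thesis using g0 unfolding goodsp_def sp by auto
  qed
  show ?thesis using st good unfolding astable_def by auto
qed

lemma no_child:
  assumes st: "astable n d M V r rk f" and nc: "\<forall>x\<in>V. x \<noteq> r \<longrightarrow> par f x \<noteq> r"
  shows "V = {r}"
proof -
  have fin: "finite V" and rV: "r \<in> V" using st unfolding astable_def by auto
  have False if "x \<in> V" "x \<noteq> r" for x
    using that
  proof (induction "card {y\<in>V. rk y < rk x}" arbitrary: x rule: less_induct)
    case less
    have p: "par f x \<in> V" "rk (par f x) < rk x" using st less.prems unfolding astable_def by auto
    have pr: "par f x \<noteq> r" using nc less.prems by auto
    have "{y\<in>V. rk y < rk (par f x)} \<subset> {y\<in>V. rk y < rk x}" using p by auto
    then have "card {y\<in>V. rk y < rk (par f x)} < card {y\<in>V. rk y < rk x}"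
      using fin by (intro psubset_card_mono) auto
    from less.hyps[OF this p(1) pr] show False .
  qed
  then show ?thesis using rV by auto
qed

lemma forget3:
  assumes st: "astable n d {1,2,3} V r rk f" and dpos: "fst d + snd d > 0"
  shows "\<exists>V' r' rk' f'. astable n d {1,2} V' r' rk' f' \<and> pt_eq (ev f 1) (ev f' 1) \<and> pt_eq (ev f 2) (ev f' 2)"
proof -
  define c3 where "c3 = mcomp f 3"
  define S where "S = aspecials {1,2,3} V r f c3"
  have fin: "finite V" and rV: "r \<in> V" using st unfolding astable_def by auto
  have c3V: "c3 \<in> V" using st unfolding astable_def c3_def by auto
  have finS: "finite S" unfolding S_def using finite_aspecials[OF fin] by simp
  have m3S: "Mark 3 \<in> S" unfolding S_def c3_def by simp
  show ?thesis
  proof (cases "cdeg f c3 = (0,0) \<and> card S = 3")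
    case False
    then have "astable n d {1,2} V r rk f" using forget_simple[OF st] unfolding S_def c3_def by blast
    then show ?thesis using pt_eq_refl by blast
  next
    case True
    then have c0: "cdeg f c3 = (0,0)" and cS: "card S = 3" by auto
    define T where "T = S - {Mark 3}"
    have cT: "card T = 2" unfolding T_def using cS m3S finS by (simp add: card_Diff_singleton)
    have ST: "S = insert (Mark 3) T" unfolding T_def using m3S by auto
    have m3T: "Mark 3 \<notin> T" unfolding T_def by auto
    show ?thesis
    proof (cases "c3 = r")
      case False
      have UT: "Up \<in> T" unfolding T_def S_def using False by simp
      have "card (T - {Up}) = 1" using cT UT finS unfolding T_def by (simp add: card_Diff_singleton)
      then obtain s where s: "T - {Up} = {s}" by (meson card_1_singletonE)
      have S3: "S = {Mark 3, Up, s}" using ST UT s by auto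
      have sU: "s \<noteq> Up" "s \<noteq> Mark 3" using s m3T by auto
      show ?thesis
      proof (cases s)
        case Up then show ?thesis using sU by simp
      next
        case (Down y)
        note A = contractP_Down[OF st c3V False c0 S3[unfolded S_def Down]]
        show ?thesis apply (intro exI conjI) apply (rule A(1)) using A(2,3) pt_eq_refl by simp_all
      next
        case (Mark j)
        have j: "j \<in> {1,2}"
        proof -
          have "Mark j \<in> S" using S3 Mark by simp
          then have "j \<in> {1,2,3}" unfolding S_def by simp
          then show ?thesis using sU Mark by auto
        qed
        note A = contractP_Mark[OF st c3V False c0 S3[unfolded S_def Mark] j]
        show ?thesis apply (intro exI conjI) apply (rule A(1)) using A(2,3) by simp_all
      qed
    next
      case True
      have r0: "cdeg f r = (0,0)" using c0 True by simp
      have UT: "Up \<notin> T" unfolding T_def S_def using True by simp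
      obtain s1 s2 where s12: "T = {s1, s2}" "s1 \<noteq> s2" using cT by (meson card_2_iff)
      have S3: "aspecials {1,2,3} V r f r = {Mark 3, s1, s2}" using ST s12 True unfolding S_def by simp
      have sU: "s1 \<noteq> Up" "s2 \<noteq> Up" "s1 \<noteq> Mark 3" "s2 \<noteq> Mark 3" using UT m3T s12 by auto
      have mk: "j \<in> {1,2}" if "Mark j \<in> {s1, s2}" for j
      proof -
        have "Mark j \<in> aspecials {1,2,3} V r f r" unfolding S3 using that by auto
        then have "j \<in> {1,2,3}" by simp
        then show ?thesis using that sU by auto
      qed
      have key: "\<exists>V' r' rk' f'. astable n d {1,2} V' r' rk' f' \<and> pt_eq (ev f 1) (ev f' 1) \<and> pt_eq (ev f 2) (ev f' 2)"
        if "aspecials {1,2,3} V r f r = {Mark 3, Down y, t}" "t \<noteq> Down y" "t \<noteq> Up" "t \<noteq> Mark 3"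
          "\<And>j. t = Mark j \<Longrightarrow> j \<in> {1,2}" for y t
      proof (cases t)
        case Up then show ?thesis using that by simp
      next
        case (Down y2)
        note A = contractR_Down[OF st r0 that(1)[unfolded Down]]
        have "y \<noteq> y2" using that(2) Down by auto
        note A = A[OF this]
        show ?thesis apply (intro exI conjI) apply (rule A(1)) using A(2,3) pt_eq_refl by simp_all
      next
        case (Mark j)
        note A = contractR_Mark[OF st r0 that(1)[unfolded Mark] that(5)[OF Mark]]
        show ?thesis apply (intro exI conjI) apply (rule A(1)) using A(2,3) by simp_all
      qed
      show ?thesis
      proof (cases "\<exists>y. s1 = Down y")
        case True
        then obtain y where y: "s1 = Down y" by blast
        show ?thesis using key[of y s2] S3 y s12(2) sU mk by auto
      next
        case F1: False
        show ?thesis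
        proof (cases "\<exists>y. s2 = Down y")
          case True
          then obtain y where y: "s2 = Down y" by blast
          have "aspecials {1,2,3} V r f r = {Mark 3, Down y, s1}" using S3 y by auto
          then show ?thesis using key[of y s1] y s12(2) sU mk by auto
        next
          case F2: False
          have "\<forall>x\<in>V. x \<noteq> r \<longrightarrow> par f x \<noteq> r"
          proof (intro ballI impI notI)
            fix x assume "x \<in> V" "x \<noteq> r" "par f x = r"
            then have "Down x \<in> aspecials {1,2,3} V r f r" by simp
            then have "Down x \<in> {Mark 3, s1, s2}" unfolding S3 .
            then show False using F1 F2 by auto
          qed
          then have "V = {r}" using no_child[OF st] by blast
          then have "fst d = 0" "snd d = 0" using st r0 unfolding astable_def by auto
          then show ?thesis using dpos by simp
        qed
      qed
    qed
  qed
qed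



lemma form_eval_10: "form_eval e a (1, 0) = a e"
proof -
  have "form_eval e a (1,0) = (\<Sum>k\<le>e. (if k = e then a k else 0))"
    unfolding form_eval_def by (rule sum.cong) auto
  also have "\<dots> = a e" by simp
  finally show ?thesis .
qed

lemma form_root:
  assumes "e > 0"
  shows "\<exists>z. z \<noteq> (0, 0) \<and> form_eval e a z = 0"
proof (cases "a e = 0")
  case True
  then show ?thesis using form_eval_10[of e a] by (intro exI[of _ "(1,0)"]) auto
next
  case False
  define p where "p = (\<Sum>k\<le>e. monom (a k) k)"
  have cp: "coeff p i = (if i \<le> e then a i else 0)" for i
    unfolding p_def by (simp add: coeff_sum coeff_monom)
  have dp: "degree p = e"
  proof (rule antisym)
    show "degree p \<le> e" by (rule degree_le) (auto simp: cp)
    show "e \<le> degree p" by (rule le_degree) (simp add: cp False)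
  qed
  have "\<not> constant (poly p)" using dp assms by (simp add: constant_degree)
  then obtain s where s: "poly p s = 0" using fundamental_theorem_of_algebra by blast
  have "poly p s = (\<Sum>k\<le>e. a k * s ^ k)"
    unfolding poly_altdef dp by (rule sum.cong) (auto simp: cp)
  also have "\<dots> = form_eval e a (s, 1)" unfolding form_eval_def by simp
  finally show ?thesis using s by (intro exI[of _ "(s,1)"]) auto
qed


lemma addD:
  assumes st: "astable n d {1,2} V r rk f" and c: "c \<in> V" and z0: "z0 \<noteq> (0,0)"
    and kz: "kval n k (cval f c z0) = 0"
  shows "\<exists>V' r' rk' f'. astable n d {1,2,3} V' r' rk' f' \<and> ev f' 1 = ev f 1 \<and> ev f' 3 = ev f 2
            \<and> kval n k (ev f' 2) = 0"
proof -
  define f1 where "f1 = f\<lparr>mcomp := mcomp f \<circ> sw23, mpt := mpt f \<circ> sw23\<rparr>"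
  have M: "sw23 ` {1,2} = {1,3::nat}" by (auto simp: sw23_def)
  have st1: "astable n d {1,3} V r rk f1" using relabel_astable(1)[OF st] M unfolding f1_def by simp
  have e1: "ev f1 1 = ev f 1" "ev f1 3 = ev f 2" using relabel_astable(2)[OF st] unfolding f1_def
    by (auto simp: sw23_def)
  have cv1: "cval f1 x z = cval f x z" for x z unfolding f1_def cval_def by simp
  have kz1: "kval n k (cval f1 c z0) = 0" using kz cv1 by simp
  have fin: "finite V" using st unfolding astable_def by auto
  obtain b where b: "b \<notin> V" using fin ex_new_if_finite[OF infinite_UNIV_nat] by blast
  show ?thesis
  proof (cases "\<exists>l\<in>aspecials {1,3} V r f1 c. \<not> p1_distinct z0 (special_pt f1 c l)")
    case False
    then have D: "\<forall>l\<in>aspecials {1,3} V r f1 c. p1_distinct z0 (special_pt f1 c l)" by blast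
    note A = addD_A[OF st1 c z0 D]
    show ?thesis apply (intro exI conjI) apply (rule A(1)) apply (rule trans[OF A(2) e1(1)]) apply (rule trans[OF A(3) e1(2)]) apply (subst A(4)) apply (rule kz1) done
  next
    case True
    then obtain l where l: "l \<in> aspecials {1,3} V r f1 c" "\<not> p1_distinct z0 (special_pt f1 c l)" by blast
    have kw: "kval n k (cval f1 c (special_pt f1 c l)) = 0" using kval_move[OF z0 l(2) kz1] .
    have parV: "par f1 y \<in> V" "pt_eq (cval f1 y (qpt f1 y)) (cval f1 (par f1 y) (ppt f1 y))"
      if "y \<in> V" "y \<noteq> r" for y
      using st1 that unfolding astable_def by auto
    show ?thesis
    proof (cases l)
      case Up
      then have cr: "c \<noteq> r" using l by simp
      have "kval n k (cval f1 c (qpt f1 c)) = 0" using kw Up by simp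
      then have kv: "kval n k (cval f1 (par f1 c) (ppt f1 c)) = 0" using kval_pt_eq[OF parV(2)[OF c cr]] by simp
      note A = addD_C[OF st1 c cr b]
      show ?thesis apply (intro exI conjI) apply (rule A(1)) apply (rule trans[OF A(2) e1(1)]) apply (rule trans[OF A(3) e1(2)]) apply (subst A(4)) apply (rule kv) done
    next
      case (Down y)
      then have y: "y \<in> V" "y \<noteq> r" "par f1 y = c" using l by auto
      have kv: "kval n k (cval f1 (par f1 y) (ppt f1 y)) = 0" using kw Down y by simp
      note A = addD_C[OF st1 y(1,2) b]
      show ?thesis apply (intro exI conjI) apply (rule A(1)) apply (rule trans[OF A(2) e1(1)]) apply (rule trans[OF A(3) e1(2)]) apply (subst A(4)) apply (rule kv) done
    next
      case (Mark j)
      then have j: "j \<in> {1,3}" "mcomp f1 j = c" using l by auto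
      have kv: "kval n k (cval f1 c (mpt f1 j)) = 0" using kw Mark by simp
      note A = addD_B[OF st1 j b]
      have kv': "kval n k (cval f1 (mcomp f1 j) (mpt f1 j)) = 0" using kv j by simp
      show ?thesis apply (intro exI conjI) apply (rule A(1)) apply (rule trans[OF A(2) e1(1)]) apply (rule trans[OF A(3) e1(2)]) apply (subst A(4)) apply (rule kv) done
    qed
  qed
qed

lemma hard:
  assumes kpos: "dcomp d k > 0"
  shows "Gamma1 n d X \<subseteq> Gamma2 n d X (Ddiv n k)"
proof
  fix p assume "p \<in> Gamma1 n d X"
  then obtain f a where f: "p \<in> Xpts n" "is_stable_map n d f" "a \<in> X" "pt_eq (ev f 1) a" "pt_eq (ev f 2) p"
    unfolding Gamma1_def by auto
  have dpos: "fst d + snd d > 0" using kpos unfolding dcomp_def by (auto split: if_splits)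
  obtain V r rk f1 where f1: "astable n d {1,2} V r rk f1" "pt_eq (ev f 1) (ev f1 1)" "pt_eq (ev f 2) (ev f1 2)"
    using forget3[OF embed[OF f(2)] dpos] by blast
  have "(\<Sum>c\<in>V. kdeg k (cdeg f1 c)) = dcomp d k"
    using f1(1) unfolding astable_def kdeg_def dcomp_def by auto
  then have "\<exists>c\<in>V. kdeg k (cdeg f1 c) > 0"
  proof (rule contrapos_pp)
    assume "\<not> (\<exists>c\<in>V. kdeg k (cdeg f1 c) > 0)"
    then have "(\<Sum>c\<in>V. kdeg k (cdeg f1 c)) = 0" by simp
    then show "(\<Sum>c\<in>V. kdeg k (cdeg f1 c)) \<noteq> dcomp d k" using kpos by simp
  qed
  then obtain c where c: "c \<in> V" "kdeg k (cdeg f1 c) > 0" by blast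
  obtain z0 where z0: "z0 \<noteq> (0,0)" "kval n k (cval f1 c z0) = 0"
    unfolding kval_cval using form_root[OF c(2)] by blast
  obtain V2 r2 rk2 f2 where f2: "astable n d {1,2,3} V2 r2 rk2 f2" "ev f2 1 = ev f1 1" "ev f2 3 = ev f1 2"
    "kval n k (ev f2 2) = 0"
    using addD[OF f1(1) c(1) z0] by blast
  obtain g where g: "is_stable_map n d g" "\<forall>j\<in>{1,2,3}. ev g j = ev f2 j" using serialize[OF f2(1)] by blast
  have g1: "pt_eq (ev g 1) a" using g(2) f2(2) pt_eq_trans[OF pt_eq_sym[OF f1(2)] f(4)] by simp
  have g3: "pt_eq (ev g 3) p" using g(2) f2(3) pt_eq_trans[OF pt_eq_sym[OF f1(3)] f(5)] by simp
  have g2: "ev g 2 \<in> Ddiv n k" using g(2) f2(4) ev_Xpts[OF g(1), of 2] by (simp add: Ddiv_iff)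
  have "is_stable_map n d g \<and> (\<exists>x\<in>X. pt_eq (ev g 1) x) \<and> (\<exists>x\<in>Ddiv n k. pt_eq (ev g 2) x) \<and> pt_eq (ev g 3) p"
    using g(1) g1 g2 g3 f(3) pt_eq_refl by blast
  then show "p \<in> Gamma2 n d X (Ddiv n k)" unfolding Gamma2_def using f(1) by blast
qed

theorem lemma2p3:
  fixes n i j k :: nat and d :: "nat \<times> nat"
  assumes "n \<ge> 3" and "(i, j) \<in> WP n" and "k \<in> {1, 2}"
  shows "Gamma2 n d (schubert n i j) (Ddiv n k) =
           (if dcomp d k > 0 then Gamma1 n d (schubert n i j)
            else Gamma1 n d (schubert n i j) \<inter> Ddiv n k)"
proof (cases "dcomp d k > 0")
  case True
  then show ?thesis using hard[OF True, of n "schubert n i j"] G2_sub_G1[of n d "schubert n i j" "Ddiv n k"] by auto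
next
  case False
  then show ?thesis using deg0_case[of d k] by auto
qed


end
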